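(* Assume $1-1/\gamma<\beta<1$. Then for every $b\ge2$, $$\lim_{N\to\infty}\log(N)\,\mathbb E\Big[\sum_{k=2}^N(\eta^N_k)^b\Big]=0.$$
   Context: Fix $\gamma>1$, $\beta\in(0,1)$. $\Xi$ is a Poisson point process on $(0,\infty)$ with intensity $x^{-2}dx$ and atoms $w_1>w_2>\cdots$. Conditionally on $\Xi$, $I^N=(I^N_1,\dots,I^N_N)$ are $N$ indices sampled without replacement from $\{1,\dots,\lceil N^\gamma\rceil\}$ with weights $w_i^\beta$ (each successive draw picks a not-yet-drawn index $i$ with probability proportional to $w_i^\beta$ among the not-yet-drawn ones). Let $\hat I^N$ be the rearrangement with $w_{\hat I^N_1}>\dots>w_{\hat I^N_N}$ and $\eta^N_i=w_{\hat I^N_i}/\sum_{k=1}^N w_{I^N_k}$. *)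

theory Defs
  imports "HOL-Probability.Probability"
begin

definition ppp_intensity :: "real set \<Rightarrow> ennreal" where
  "ppp_intensity A = (\<integral>\<^sup>+ x. ennreal (1 / x\<^sup>2) * indicator A x \<partial>lborel)"

definition ppp_count :: "(nat \<Rightarrow> real) \<Rightarrow> real set \<Rightarrow> nat" where
  "ppp_count w A = card {i. w i \<in> A}"

text \<open>The random sequence w (defined on the probability space M), with
  w 0 > w 1 > ... > 0, enumerates the atoms of a Poisson point process on (0,oo)
  with intensity x^(-2) dx: for pairwise disjoint Borel sets A_0,...,A_(n-1) in
  (0,oo) of finite intensity, the counts are independent and Poisson distributed
  with means the intensities.\<close>
definition is_ppp_atoms :: "'a measure \<Rightarrow> ('a \<Rightarrow> nat \<Rightarrow> real) \<Rightarrow> bool" where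
  "is_ppp_atoms M w \<longleftrightarrow>
     prob_space M \<and>
     (\<forall>i. (\<lambda>\<omega>. w \<omega> i) \<in> borel_measurable M) \<and>
     (\<forall>\<omega>\<in>space M. (\<forall>i j. i < j \<longrightarrow> w \<omega> j < w \<omega> i) \<and> (\<forall>i. 0 < w \<omega> i)) \<and>
     (\<forall>(n::nat) (A :: nat \<Rightarrow> real set).
        (\<forall>k<n. A k \<in> sets borel \<and> A k \<subseteq> {0<..} \<and> ppp_intensity (A k) < \<infinity>) \<and>
        disjoint_family_on A {..<n} \<longrightarrow>
        prob_space.indep_vars M (\<lambda>_. count_space UNIV)
           (\<lambda>k \<omega>. ppp_count (w \<omega>) (A k)) {..<n} \<and>
        (\<forall>k<n. \<forall>j::nat.
           measure M {\<omega>\<in>space M. ppp_count (w \<omega>) (A k) = j} =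
           enn2real (ppp_intensity (A k)) ^ j / fact j * exp (- enn2real (ppp_intensity (A k)))))"

definition n_avail :: "real \<Rightarrow> nat \<Rightarrow> nat" where
  "n_avail \<gamma> N = nat \<lceil>real N powr \<gamma>\<rceil>"

definition draws :: "nat \<Rightarrow> nat \<Rightarrow> nat list set" where
  "draws m N = {xs. distinct xs \<and> set xs \<subseteq> {..<m} \<and> length xs = N}"

text \<open>Probability (given the weights w) of drawing the ordered list xs, each
  successive draw choosing a not-yet-drawn index i in {0..<m} with probability
  proportional to (w i) powr beta.\<close>
definition draw_prob :: "real \<Rightarrow> (nat \<Rightarrow> real) \<Rightarrow> nat \<Rightarrow> nat list \<Rightarrow> real" where
  "draw_prob \<beta> w m xs =
     (\<Prod>k<length xs. w (xs ! k) powr \<beta> /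
        (\<Sum>j\<in>{..<m} - set (take k xs). w j powr \<beta>))"

definition hatI :: "(nat \<Rightarrow> real) \<Rightarrow> nat list \<Rightarrow> nat list" where
  "hatI w xs = rev (sort_key w xs)"

definition eta :: "(nat \<Rightarrow> real) \<Rightarrow> nat list \<Rightarrow> nat \<Rightarrow> real" where
  "eta w xs k = w (hatI w xs ! (k - 1)) / (\<Sum>i<length xs. w (xs ! i))"

definition cond_exp_eta :: "real \<Rightarrow> real \<Rightarrow> real \<Rightarrow> (nat \<Rightarrow> real) \<Rightarrow> nat \<Rightarrow> real" where
  "cond_exp_eta \<gamma> \<beta> b w N =
     (\<Sum>xs\<in>draws (n_avail \<gamma> N) N.
        draw_prob \<beta> w (n_avail \<gamma> N) xs * (\<Sum>k=2..N. eta w xs k powr b))"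

end

theory Submission
  imports Defs "HOL-Real_Asymp.Real_Asymp"
begin

definition remw :: "real \<Rightarrow> (nat \<Rightarrow> real) \<Rightarrow> nat \<Rightarrow> nat list \<Rightarrow> real" where
  "remw \<beta> w m xs = (\<Sum>j\<in>{..<m} - set xs. w j powr \<beta>)"

lemma draw_prob_snoc:
  "draw_prob \<beta> w m (xs @ [x]) = draw_prob \<beta> w m xs * (w x powr \<beta> / remw \<beta> w m xs)"
  unfolding draw_prob_def remw_def
  by (simp add: lessThan_Suc nth_append mult.commute)

lemma draw_prob_nonneg: "draw_prob \<beta> w m xs \<ge> 0"
  unfolding draw_prob_def by (intro prod_nonneg divide_nonneg_nonneg sum_nonneg) auto

lemma finite_draws: "finite (draws m n)"
proof -
  have "draws m n \<subseteq> {xs. set xs \<subseteq> {..<m} \<and> length xs = n}" by (auto simp: draws_def)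
  moreover have "finite {xs. set xs \<subseteq> {..<m} \<and> length xs = n}"
    by (rule finite_lists_length_eq) auto
  ultimately show ?thesis by (rule finite_subset)
qed

lemma draws_Suc:
  "draws m (Suc n) = (\<lambda>(xs, x). xs @ [x]) ` (SIGMA xs:draws m n. {..<m} - set xs)"
proof
  show "draws m (Suc n) \<subseteq> (\<lambda>(xs, x). xs @ [x]) ` (SIGMA xs:draws m n. {..<m} - set xs)"
  proof
    fix ys assume ys: "ys \<in> draws m (Suc n)"
    then have "ys \<noteq> []" by (auto simp: draws_def)
    then obtain xs x where e: "ys = xs @ [x]" by (metis rev_exhaust)
    have "(xs, x) \<in> (SIGMA xs:draws m n. {..<m} - set xs)"
      using ys unfolding e by (auto simp: draws_def)
    then show "ys \<in> (\<lambda>(xs, x). xs @ [x]) ` (SIGMA xs:draws m n. {..<m} - set xs)"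
      unfolding e by force
  qed
next
  show "(\<lambda>(xs, x). xs @ [x]) ` (SIGMA xs:draws m n. {..<m} - set xs) \<subseteq> draws m (Suc n)"
    by (auto simp: draws_def)
qed

lemma sum_draws_Suc:
  "(\<Sum>ys\<in>draws m (Suc n). f ys) = (\<Sum>xs\<in>draws m n. \<Sum>x\<in>{..<m} - set xs. f (xs @ [x]))"
proof -
  have inj: "inj_on (\<lambda>(xs, x). xs @ [x]) (SIGMA xs:draws m n. {..<m} - set xs)"
    by (auto simp: inj_on_def)
  have "(\<Sum>ys\<in>draws m (Suc n). f ys) = (\<Sum>p\<in>(SIGMA xs:draws m n. {..<m} - set xs). f ((\<lambda>(xs, x). xs @ [x]) p))"
    unfolding draws_Suc by (rule sum.reindex[OF inj, unfolded comp_def])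
  also have "\<dots> = (\<Sum>xs\<in>draws m n. \<Sum>x\<in>{..<m} - set xs. f (xs @ [x]))"
    using sum.Sigma[of "draws m n" "\<lambda>xs. {..<m} - set xs" "\<lambda>xs x. f (xs @ [x])"] finite_draws
    by (simp add: split_def)
  finally show ?thesis .
qed

lemma remw_pos:
  assumes pos: "\<And>i. 0 < w i" and xs: "xs \<in> draws m n" and nm: "n < m"
  shows "remw \<beta> w m xs > 0"
proof -
  have "card (set xs) = n" using xs by (auto simp: draws_def distinct_card)
  then have "\<not> {..<m} \<subseteq> set xs" using nm by (metis card_lessThan card_mono finite_set not_le)
  then have ne: "{..<m} - set xs \<noteq> {}" by auto
  have "\<And>j. 0 < w j powr \<beta>" using pos by (metis powr_gt_zero less_irrefl)
  then show ?thesis unfolding remw_def using ne by (intro sum_pos) auto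
qed

lemma sum_draw_prob:
  assumes pos: "\<And>i. 0 < w i" and nm: "n \<le> m"
  shows "(\<Sum>xs\<in>draws m n. draw_prob \<beta> w m xs) = 1"
  using nm
proof (induction n)
  case 0
  have "draws m 0 = {[]}" by (auto simp: draws_def)
  then show ?case by (simp add: draw_prob_def)
next
  case (Suc n)
  have "(\<Sum>ys\<in>draws m (Suc n). draw_prob \<beta> w m ys)
      = (\<Sum>xs\<in>draws m n. draw_prob \<beta> w m xs * ((\<Sum>x\<in>{..<m} - set xs. w x powr \<beta>) / remw \<beta> w m xs))"
    unfolding sum_draws_Suc draw_prob_snoc by (simp add: sum_distrib_left sum_divide_distrib)
  also have "\<dots> = (\<Sum>xs\<in>draws m n. draw_prob \<beta> w m xs)"
  proof (rule sum.cong)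
    fix xs assume "xs \<in> draws m n"
    then have "remw \<beta> w m xs > 0" using remw_pos[OF pos _ ] Suc.prems by auto
    then show "draw_prob \<beta> w m xs * ((\<Sum>x\<in>{..<m} - set xs. w x powr \<beta>) / remw \<beta> w m xs) = draw_prob \<beta> w m xs"
      by (simp add: remw_def)
  qed simp
  also have "\<dots> = 1" using Suc by simp
  finally show ?case .
qed

lemma miss_prob:
  assumes pos: "\<And>i. 0 < w i" and nm: "n \<le> m" and im: "i < m"
  shows "(\<Sum>xs\<in>draws m n. draw_prob \<beta> w m xs * (if i \<in> set xs then 0 else 1))
           \<le> (1 - w i powr \<beta> / (\<Sum>j<m. w j powr \<beta>)) ^ n"
  using nm
proof (induction n)
  case 0
  have "draws m 0 = {[]}" by (auto simp: draws_def)
  then show ?case by (simp add: draw_prob_def)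
next
  case (Suc n)
  define p where "p = w i powr \<beta> / (\<Sum>j<m. w j powr \<beta>)"
  have step: "(\<Sum>x\<in>{..<m} - set xs. draw_prob \<beta> w m (xs @ [x]) * (if i \<in> set (xs @ [x]) then 0 else 1))
      \<le> (1 - p) * (draw_prob \<beta> w m xs * (if i \<in> set xs then 0 else 1))" if xs: "xs \<in> draws m n" for xs
  proof (cases "i \<in> set xs")
    case True
    then show ?thesis by simp
  next
    case False
    have R: "remw \<beta> w m xs > 0" using remw_pos[OF pos xs] Suc.prems by auto
    have iR: "i \<in> {..<m} - set xs" using False im by auto
    have fin: "finite ({..<m} - set xs)" by simp
    have "(\<Sum>x\<in>{..<m} - set xs. draw_prob \<beta> w m (xs @ [x]) * (if i \<in> set (xs @ [x]) then 0 else 1))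
        = (\<Sum>x\<in>({..<m} - set xs) - {i}. draw_prob \<beta> w m xs * (w x powr \<beta> / remw \<beta> w m xs))"
      using False by (subst sum.remove[OF fin iR]) (auto simp: draw_prob_snoc intro!: sum.cong)
    also have "\<dots> = draw_prob \<beta> w m xs * ((remw \<beta> w m xs - w i powr \<beta>) / remw \<beta> w m xs)"
      unfolding remw_def
      by (subst (2) sum.remove[OF fin iR]) (simp add: sum_distrib_left sum_divide_distrib[symmetric])
    also have "\<dots> = draw_prob \<beta> w m xs * (1 - w i powr \<beta> / remw \<beta> w m xs)"
      using R by (simp add: diff_divide_distrib)
    also have "\<dots> \<le> draw_prob \<beta> w m xs * (1 - p)"
    proof (rule mult_left_mono[OF _ draw_prob_nonneg])
      have "remw \<beta> w m xs \<le> (\<Sum>j<m. w j powr \<beta>)"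
        unfolding remw_def by (rule sum_mono2) auto
      then have "p \<le> w i powr \<beta> / remw \<beta> w m xs"
        unfolding p_def using R by (intro divide_left_mono) auto
      then show "1 - w i powr \<beta> / remw \<beta> w m xs \<le> 1 - p" by simp
    qed
    finally show ?thesis using False by (simp add: mult.commute)
  qed
  have "(\<Sum>ys\<in>draws m (Suc n). draw_prob \<beta> w m ys * (if i \<in> set ys then 0 else 1))
      \<le> (\<Sum>xs\<in>draws m n. (1 - p) * (draw_prob \<beta> w m xs * (if i \<in> set xs then 0 else 1)))"
    unfolding sum_draws_Suc by (rule sum_mono) (rule step)
  also have "\<dots> = (1 - p) * (\<Sum>xs\<in>draws m n. draw_prob \<beta> w m xs * (if i \<in> set xs then 0 else 1))"
    by (simp add: sum_distrib_left)
  also have "\<dots> \<le> (1 - p) * (1 - p) ^ n"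
  proof (rule mult_left_mono)
    show "(\<Sum>xs\<in>draws m n. draw_prob \<beta> w m xs * (if i \<in> set xs then 0 else 1)) \<le> (1 - p) ^ n"
      using Suc unfolding p_def by simp
    have "w i powr \<beta> \<le> (\<Sum>j<m. w j powr \<beta>)"
      using im by (intro member_le_sum) auto
    moreover have "0 < w i powr \<beta>" using pos[of i] by simp
    ultimately have "0 < (\<Sum>j<m. w j powr \<beta>)" "w i powr \<beta> \<le> (\<Sum>j<m. w j powr \<beta>)" by linarith+
    then show "0 \<le> 1 - p" unfolding p_def by (simp add: divide_le_eq_1_pos)
  qed
  finally show ?case unfolding p_def by simp
qed

lemma draws_avg_bound:
  fixes g :: "nat list \<Rightarrow> real" and G :: "nat set"
  assumes pos: "\<And>i. 0 < w i" and nm: "n \<le> m" and Gm: "G \<subseteq> {..<m}"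
    and g01: "\<And>xs. xs \<in> draws m n \<Longrightarrow> 0 \<le> g xs \<and> g xs \<le> 1"
    and good: "\<And>xs. xs \<in> draws m n \<Longrightarrow> G \<subseteq> set xs \<Longrightarrow> g xs \<le> c"
    and c: "c \<ge> 0"
  shows "(\<Sum>xs\<in>draws m n. draw_prob \<beta> w m xs * g xs)
          \<le> c + (\<Sum>i\<in>G. (1 - w i powr \<beta> / (\<Sum>j<m. w j powr \<beta>)) ^ n)"
proof -
  have finG: "finite G" using Gm finite_subset by blast
  have pw: "g xs \<le> c + (\<Sum>i\<in>G. (if i \<in> set xs then 0 else 1))" if xs: "xs \<in> draws m n" for xs
  proof (cases "G \<subseteq> set xs")
    case True
    have "0 \<le> (\<Sum>i\<in>G. (if i \<in> set xs then 0 else 1::real))" by (intro sum_nonneg) auto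
    then show ?thesis using good[OF xs] True by linarith
  next
    case False
    then obtain i where i: "i \<in> G" "i \<notin> set xs" by auto
    have "1 \<le> (\<Sum>i\<in>G. (if i \<in> set xs then 0 else 1::real))"
      using member_le_sum[of i G "\<lambda>i. (if i \<in> set xs then 0 else 1::real)"] i finG by auto
    then show ?thesis using g01[OF xs] c by linarith
  qed
  have "(\<Sum>xs\<in>draws m n. draw_prob \<beta> w m xs * g xs)
      \<le> (\<Sum>xs\<in>draws m n. draw_prob \<beta> w m xs * (c + (\<Sum>i\<in>G. (if i \<in> set xs then 0 else 1))))"
    by (intro sum_mono mult_left_mono pw draw_prob_nonneg)
  also have "\<dots> = c * (\<Sum>xs\<in>draws m n. draw_prob \<beta> w m xs)
      + (\<Sum>i\<in>G. \<Sum>xs\<in>draws m n. draw_prob \<beta> w m xs * (if i \<in> set xs then 0 else 1))"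
    by (simp add: distrib_left sum.distrib sum_distrib_left sum_distrib_right sum.swap[of _ G] mult.commute)
  also have "\<dots> \<le> c + (\<Sum>i\<in>G. (1 - w i powr \<beta> / (\<Sum>j<m. w j powr \<beta>)) ^ n)"
  proof -
    have s1: "(\<Sum>xs\<in>draws m n. draw_prob \<beta> w m xs) = 1" by (rule sum_draw_prob[OF pos nm])
    have s2: "(\<Sum>i\<in>G. \<Sum>xs\<in>draws m n. draw_prob \<beta> w m xs * (if i \<in> set xs then 0 else 1))
       \<le> (\<Sum>i\<in>G. (1 - w i powr \<beta> / (\<Sum>j<m. w j powr \<beta>)) ^ n)"
    proof (rule sum_mono)
      fix i assume "i \<in> G"
      then have "i < m" using Gm by auto
      then show "(\<Sum>xs\<in>draws m n. draw_prob \<beta> w m xs * (if i \<in> set xs then 0 else 1))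
          \<le> (1 - w i powr \<beta> / (\<Sum>j<m. w j powr \<beta>)) ^ n" by (rule miss_prob[OF pos nm])
    qed
    show ?thesis using s1 s2 by simp
  qed
  finally show ?thesis .
qed

lemma hatI_props:
  assumes "distinct xs"
  shows "distinct (hatI w xs)" "set (hatI w xs) = set xs" "length (hatI w xs) = length xs"
  using assms by (auto simp: hatI_def distinct_sort)

lemma hatI_first_max:
  assumes "xs \<noteq> []" "x \<in> set xs"
  shows "w x \<le> w (hatI w xs ! 0)"
proof -
  let ?s = "sort_key w xs"
  have s: "sorted (map w ?s)" by (rule sorted_sort_key)
  have ne: "?s \<noteq> []" using assms by (metis length_0_conv length_sort)
  have "hatI w xs ! 0 = last ?s" unfolding hatI_def using ne by (simp add: hd_rev hd_conv_nth[symmetric])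
  moreover obtain i where i: "i < length ?s" "?s ! i = x" using assms(2) by (metis in_set_conv_nth set_sort)
  moreover have "last ?s = ?s ! (length ?s - 1)" using ne by (simp add: last_conv_nth)
  moreover have "w (?s ! i) \<le> w (?s ! (length ?s - 1))"
    using s i(1) by (auto simp: sorted_iff_nth_mono)
  ultimately show ?thesis by simp
qed

lemma sum_hatI_tail:
  assumes "distinct xs" "xs \<noteq> []"
  shows "(\<Sum>k=2..length xs. f (hatI w xs ! (k - 1))) = (\<Sum>x\<in>set xs - {hatI w xs ! 0}. f x)"
proof -
  let ?h = "hatI w xs"
  have d: "distinct ?h" and st: "set ?h = set xs" and l: "length ?h = length xs"
    using hatI_props[OF assms(1)] by auto
  have "(\<Sum>k=2..length xs. f (?h ! (k - 1))) = (\<Sum>i\<in>{1..<length xs}. f (?h ! i))"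
    by (rule sum.reindex_bij_witness[where i="\<lambda>i. i + 1" and j="\<lambda>k. k - 1"]) auto
  also have "\<dots> = (\<Sum>x\<in>(\<lambda>i. ?h ! i) ` {1..<length xs}. f x)"
    by (rule sum.reindex[symmetric, unfolded comp_def]) (use d l in \<open>auto simp: inj_on_def nth_eq_iff_index_eq\<close>)
  also have "(\<lambda>i. ?h ! i) ` {1..<length xs} = set xs - {?h ! 0}"
  proof
    show "(!) ?h ` {1..<length xs} \<subseteq> set xs - {?h ! 0}"
    proof
      fix x assume "x \<in> (!) ?h ` {1..<length xs}"
      then obtain i where i: "1 \<le> i" "i < length xs" "x = ?h ! i" by auto
      have "?h ! i \<noteq> ?h ! 0" proof
        assume eq: "?h ! i = ?h ! 0"
        have a0: "0 < length ?h" using l assms(2) by simp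
        have ai: "i < length ?h" using l i(2) by simp
        have "i = 0" using iffD1[OF nth_eq_iff_index_eq[OF d ai a0] eq] .
        then show False using i by simp
      qed
      moreover have "x \<in> set xs" using i st l nth_mem[of i ?h] by auto
      ultimately show "x \<in> set xs - {?h ! 0}" using i by auto
    qed
  next
    show "set xs - {?h ! 0} \<subseteq> (!) ?h ` {1..<length xs}"
    proof
      fix x assume "x \<in> set xs - {?h ! 0}"
      then have x1: "x \<in> set ?h" and x2: "x \<noteq> ?h ! 0" using st by auto
      from x1 obtain i where "i < length ?h" "?h ! i = x" by (auto simp: in_set_conv_nth)
      then have "i < length xs" "?h ! i = x" "x \<noteq> ?h ! 0" using l x2 by auto
      then show "x \<in> (!) ?h ` {1..<length xs}" by (cases i) auto
    qed
  qed
  finally show ?thesis .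
qed

lemma eta_sum_bound:
  fixes w :: "nat \<Rightarrow> real" and b :: real
  assumes dec: "\<And>i j. i < j \<Longrightarrow> w j < w i" and pos: "\<And>i. 0 < w i"
    and xs: "xs \<in> draws m N" and b: "b \<ge> 2"
  shows "(\<Sum>k=2..N. eta w xs k powr b) \<le> 1"
    and "(\<Sum>k=2..N. eta w xs k powr b) \<le> (\<Sum>j\<in>{1..<m}. (w j)\<^sup>2) / (\<Sum>x\<in>set xs. w x)\<^sup>2"
proof -
  have dxs: "distinct xs" and sxs: "set xs \<subseteq> {..<m}" and lxs: "length xs = N"
    using xs by (auto simp: draws_def)
  define S where "S = (\<Sum>x\<in>set xs. w x)"
  have S_eq: "(\<Sum>i<length xs. w (xs ! i)) = S"
    unfolding S_def using dxs
    by (simp add: sum.distinct_set_conv_list sum_list_sum_nth atLeast0LessThan)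
  have "(\<Sum>k=2..N. eta w xs k powr b) \<le> 1 \<and>
        (\<Sum>k=2..N. eta w xs k powr b) \<le> (\<Sum>j\<in>{1..<m}. (w j)\<^sup>2) / S\<^sup>2"
  proof (cases "xs = []")
    case True
    then have "N = 0" using lxs by simp
    then show ?thesis by (simp add: sum_nonneg)
  next
    case ne: False
    let ?h = "hatI w xs"
    let ?t = "?h ! 0"
    have tin: "?t \<in> set xs" using hatI_props[OF dxs] ne by (metis length_greater_0_conv nth_mem)
    have Spos: "S > 0" unfolding S_def using ne pos by (intro sum_pos) auto
    have wS: "w x \<le> S" if "x \<in> set xs" for x
      unfolding S_def using that pos by (intro member_le_sum) (auto intro: less_imp_le)
    have eta_eq: "eta w xs k = w (?h ! (k - 1)) / S" for k unfolding eta_def S_eq ..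
    have hin: "?h ! (k - 1) \<in> set xs" if "k \<in> {2..N}" for k
    proof -
      have "k - 1 < length ?h" using that hatI_props(3)[OF dxs] lxs by auto
      then show ?thesis using hatI_props(2)[OF dxs] by (metis nth_mem)
    qed
    have step1: "(\<Sum>k=2..N. eta w xs k powr b) \<le> (\<Sum>k=2..N. (w (?h ! (k - 1)) / S)\<^sup>2)"
    proof (rule sum_mono)
      fix k assume k: "k \<in> {2..N}"
      have "0 \<le> w (?h ! (k - 1)) / S" using pos Spos by (intro divide_nonneg_pos) (auto intro: less_imp_le)
      moreover have "w (?h ! (k - 1)) / S \<le> 1" using wS[OF hin[OF k]] Spos by simp
      ultimately have "(w (?h ! (k - 1)) / S) powr b \<le> (w (?h ! (k - 1)) / S) powr 2"
        using b by (intro powr_mono') auto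
      also have "\<dots> = (w (?h ! (k - 1)) / S)\<^sup>2"
        using pos Spos by (subst powr_numeral) (auto intro: divide_nonneg_pos less_imp_le)
      finally show "eta w xs k powr b \<le> (w (?h ! (k - 1)) / S)\<^sup>2" by (simp add: eta_eq)
    qed
    have step2: "(\<Sum>k=2..N. (w (?h ! (k - 1)) / S)\<^sup>2) = (\<Sum>x\<in>set xs - {?t}. (w x)\<^sup>2) / S\<^sup>2"
      using sum_hatI_tail[OF dxs ne, of "\<lambda>x. (w x / S)\<^sup>2" w] lxs
      by (simp add: power_divide sum_divide_distrib)
    have A: "(\<Sum>x\<in>set xs - {?t}. (w x)\<^sup>2) \<le> (\<Sum>j\<in>{1..<m}. (w j)\<^sup>2)"
    proof (rule sum_mono2)
      show "set xs - {?t} \<subseteq> {1..<m}"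
      proof
        fix x assume x: "x \<in> set xs - {?t}"
        have "x \<noteq> 0"
        proof
          assume "x = 0"
          then have "0 \<in> set xs" using x by simp
          have "w 0 \<le> w ?t" using hatI_first_max[OF ne \<open>0 \<in> set xs\<close>] .
          moreover have "?t \<noteq> 0" using x \<open>x = 0\<close> by auto
          then have "w ?t < w 0" using dec by simp
          ultimately show False by simp
        qed
        then show "x \<in> {1..<m}" using x sxs by auto
      qed
    qed auto
    have B: "(\<Sum>x\<in>set xs - {?t}. (w x)\<^sup>2) \<le> S\<^sup>2"
    proof -
      have "(\<Sum>x\<in>set xs - {?t}. (w x)\<^sup>2) \<le> (\<Sum>x\<in>set xs. (w x)\<^sup>2)"
        by (rule sum_mono2) auto
      also have "\<dots> \<le> (\<Sum>x\<in>set xs. w x * S)"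
        using wS pos by (intro sum_mono) (auto simp: power2_eq_square intro!: mult_left_mono less_imp_le)
      also have "\<dots> = S\<^sup>2" by (simp add: S_def sum_distrib_right power2_eq_square)
      finally show ?thesis .
    qed
    have C: "(\<Sum>x\<in>set xs - {?t}. (w x)\<^sup>2) / S\<^sup>2 \<le> (\<Sum>j\<in>{1..<m}. (w j)\<^sup>2) / S\<^sup>2"
      using A by (intro divide_right_mono) auto
    have D: "(\<Sum>x\<in>set xs - {?t}. (w x)\<^sup>2) / S\<^sup>2 \<le> 1"
      using B Spos by (simp add: divide_le_eq_1_pos)
    show ?thesis
      using step1 step2 C D by linarith
  qed
  then show "(\<Sum>k=2..N. eta w xs k powr b) \<le> 1"
    "(\<Sum>k=2..N. eta w xs k powr b) \<le> (\<Sum>j\<in>{1..<m}. (w j)\<^sup>2) / (\<Sum>x\<in>set xs. w x)\<^sup>2"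
    by (auto simp: S_def)
qed

lemma ppp_intensity_gt:
  assumes a: "a > 0"
  shows "ppp_intensity {a<..} = ennreal (1 / a)"
proof -
  have "(\<integral>\<^sup>+x. ennreal (1 / x\<^sup>2) * indicator {a..} x \<partial>lborel) = ennreal (0 - (- 1 / a))"
  proof (rule nn_integral_FTC_atLeast)
    show "(\<lambda>x::real. 1 / x\<^sup>2) \<in> borel_measurable borel" by measurable
    show "((\<lambda>x::real. - 1 / x) has_real_derivative 1 / x\<^sup>2) (at x)" if "a \<le> x" for x
      using that a by (auto intro!: derivative_eq_intros simp: power2_eq_square field_simps)
    show "0 \<le> 1 / x\<^sup>2" for x :: real by simp
    show "((\<lambda>x::real. - 1 / x) \<longlongrightarrow> 0) at_top" by real_asymp
  qed
  moreover have "(\<integral>\<^sup>+x. ennreal (1 / x\<^sup>2) * indicator {a..} x \<partial>lborel)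
      = (\<integral>\<^sup>+x. ennreal (1 / x\<^sup>2) * indicator {a<..} x \<partial>lborel)"
    by (intro nn_integral_cong_AE eventually_mono[OF AE_lborel_singleton[of a]])
       (auto simp: indicator_def)
  ultimately show ?thesis unfolding ppp_intensity_def by simp
qed

lemma ppp_basic:
  assumes ppp: "is_ppp_atoms M w" and a: "a > 0"
  shows "prob_space M"
    and "(\<lambda>\<omega>. ppp_count (w \<omega>) {a<..}) \<in> measurable M (count_space UNIV)"
    and "\<And>j. measure M {\<omega>\<in>space M. ppp_count (w \<omega>) {a<..} = j} = (1/a)^j / fact j * exp (- (1/a))"
proof -
  show P: "prob_space M" using ppp by (simp add: is_ppp_atoms_def)
  let ?A = "\<lambda>k::nat. {a<..} :: real set"
  have int: "ppp_intensity {a<..} < \<infinity>" using ppp_intensity_gt[OF a] by simp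
  have prem: "(\<forall>k<1. ?A k \<in> sets borel \<and> ?A k \<subseteq> {0<..} \<and> ppp_intensity (?A k) < \<infinity>) \<and>
      disjoint_family_on ?A {..<1}"
    using a int by (auto simp: disjoint_family_on_def)
  have H: "prob_space.indep_vars M (\<lambda>_. count_space UNIV) (\<lambda>k \<omega>. ppp_count (w \<omega>) (?A k)) {..<1} \<and>
        (\<forall>k<1. \<forall>j::nat.
           measure M {\<omega>\<in>space M. ppp_count (w \<omega>) (?A k) = j} =
           enn2real (ppp_intensity (?A k)) ^ j / fact j * exp (- enn2real (ppp_intensity (?A k))))"
  proof -
    have all: "\<forall>(n::nat) (A :: nat \<Rightarrow> real set).
        (\<forall>k<n. A k \<in> sets borel \<and> A k \<subseteq> {0<..} \<and> ppp_intensity (A k) < \<infinity>) \<and>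
        disjoint_family_on A {..<n} \<longrightarrow>
        prob_space.indep_vars M (\<lambda>_. count_space UNIV)
           (\<lambda>k \<omega>. ppp_count (w \<omega>) (A k)) {..<n} \<and>
        (\<forall>k<n. \<forall>j::nat.
           measure M {\<omega>\<in>space M. ppp_count (w \<omega>) (A k) = j} =
           enn2real (ppp_intensity (A k)) ^ j / fact j * exp (- enn2real (ppp_intensity (A k))))"
      using ppp unfolding is_ppp_atoms_def by (elim conjE)
    show ?thesis using mp[OF spec[OF spec[OF all, of 1], of ?A] prem] .
  qed
  have e: "enn2real (ppp_intensity {a<..}) = 1 / a" using ppp_intensity_gt[OF a] a by simp
  have iv: "prob_space.indep_vars M (\<lambda>_. count_space UNIV) (\<lambda>k \<omega>. ppp_count (w \<omega>) (?A k)) {..<1}"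
    using H by (rule conjunct1)
  have H2: "\<forall>k<1. \<forall>j::nat.
           measure M {\<omega>\<in>space M. ppp_count (w \<omega>) (?A k) = j} =
           enn2real (ppp_intensity (?A k)) ^ j / fact j * exp (- enn2real (ppp_intensity (?A k)))"
    using H by (rule conjunct2)
  have "\<forall>i\<in>{..<1::nat}. (\<lambda>\<omega>. ppp_count (w \<omega>) {a<..}) \<in> measurable M (count_space UNIV)"
    using iv unfolding prob_space.indep_vars_def2[OF P] by (rule conjunct1)
  then show "(\<lambda>\<omega>. ppp_count (w \<omega>) {a<..}) \<in> measurable M (count_space UNIV)"
    by (rule bspec) simp
  show "measure M {\<omega>\<in>space M. ppp_count (w \<omega>) {a<..} = j} = (1/a)^j / fact j * exp (- (1/a))" for j
  proof -
    have "measure M {\<omega>\<in>space M. ppp_count (w \<omega>) (?A 0) = j} =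
           enn2real (ppp_intensity (?A 0)) ^ j / fact j * exp (- enn2real (ppp_intensity (?A 0)))"
      using H2 by blast
    then show ?thesis unfolding e .
  qed
qed

lemma nat_rv_le:
  assumes P: "prob_space M" and X: "X \<in> measurable M (count_space UNIV)"
  shows "measure M {\<omega>\<in>space M. X \<omega> \<le> k} = (\<Sum>j\<le>k. measure M {\<omega>\<in>space M. X \<omega> = (j::nat)})"
proof -
  have s: "{\<omega>\<in>space M. X \<omega> = j} \<in> sets M" for j using X by measurable
  have "{\<omega>\<in>space M. X \<omega> \<le> k} = (\<Union>j\<in>{..k}. {\<omega>\<in>space M. X \<omega> = j})" by auto
  also have "measure M \<dots> = (\<Sum>j\<le>k. measure M {\<omega>\<in>space M. X \<omega> = j})"
  proof -
    interpret P: prob_space M by (rule P)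
    show ?thesis by (rule measure_finite_Union) (auto simp: s disjoint_family_on_def P.emeasure_finite)
  qed
  finally show ?thesis .
qed

lemma nat_rv_ge:
  assumes P: "prob_space M" and X: "X \<in> measurable M (count_space UNIV)"
  shows "measure M {\<omega>\<in>space M. k \<le> X \<omega>} = 1 - (\<Sum>j<k. measure M {\<omega>\<in>space M. X \<omega> = (j::nat)})"
proof (cases k)
  case 0
  then show ?thesis using prob_space.prob_space[OF P] by simp
next
  case (Suc k')
  have s: "{\<omega>\<in>space M. X \<omega> \<le> k'} \<in> sets M" using X by measurable
  have "{\<omega>\<in>space M. k \<le> X \<omega>} = space M - {\<omega>\<in>space M. X \<omega> \<le> k'}" using Suc by auto
  then have "measure M {\<omega>\<in>space M. k \<le> X \<omega>} = 1 - measure M {\<omega>\<in>space M. X \<omega> \<le> k'}"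
    using prob_space.prob_compl[OF P s] by simp
  also have "\<dots> = 1 - (\<Sum>j<k. measure M {\<omega>\<in>space M. X \<omega> = j})"
    using nat_rv_le[OF P X, of k'] Suc by (simp add: lessThan_Suc_atMost)
  finally show ?thesis .
qed

lemma exp_ge_term:
  fixes x :: real
  assumes "x \<ge> 0"
  shows "x ^ n / fact n \<le> exp x"
proof -
  obtain t where t: "exp x = (\<Sum>m<Suc n. x ^ m / fact m) + exp t / fact (Suc n) * x ^ Suc n"
    using Maclaurin_exp_le[of x "Suc n"] by blast
  have "x ^ n / fact n \<le> (\<Sum>m<Suc n. x ^ m / fact m)"
    using assms by (intro member_le_sum) auto
  also have "\<dots> \<le> exp x" unfolding t using assms by (intro add_increasing2) auto
  finally show ?thesis .
qed

lemma poisson_upper: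
  assumes l: "(lam::real) \<ge> 0"
  shows "1 - (\<Sum>j<k. lam ^ j / fact j * exp (- lam)) \<le> lam ^ k / fact k"
proof -
  obtain t where t: "\<bar>t\<bar> \<le> \<bar>lam\<bar>" "exp lam = (\<Sum>m<k. lam ^ m / fact m) + exp t / fact k * lam ^ k"
    using Maclaurin_exp_le[of lam k] by blast
  have "(\<Sum>j<k. lam ^ j / fact j * exp (- lam)) = exp (- lam) * (\<Sum>m<k. lam ^ m / fact m)"
    by (simp add: sum_distrib_left mult.commute)
  also have "\<dots> = exp (- lam) * (exp lam - exp t / fact k * lam ^ k)" using t(2) by simp
  also have "\<dots> = exp (- lam) * exp lam - exp (- lam) * exp t * (lam ^ k / fact k)"
    by (simp add: algebra_simps)
  also have "\<dots> = 1 - exp (t - lam) * (lam ^ k / fact k)"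
    by (simp add: exp_minus_inverse exp_diff exp_minus field_simps)
  finally have eq: "1 - (\<Sum>j<k. lam ^ j / fact j * exp (- lam)) = exp (t - lam) * (lam ^ k / fact k)" by simp
  have "exp (t - lam) \<le> 1" using t(1) l by simp
  moreover have "0 \<le> lam ^ k / fact k" using l by simp
  ultimately have "exp (t - lam) * (lam ^ k / fact k) \<le> 1 * (lam ^ k / fact k)"
    by (rule mult_right_mono)
  then show ?thesis unfolding eq by simp
qed

lemma poisson_terms_mono:
  fixes lam :: real
  assumes "i \<le> k" "real k \<le> lam"
  shows "lam ^ i / fact i \<le> lam ^ k / fact k"
  using assms
proof (induction k)
  case 0
  then show ?case by simp
next
  case (Suc k)
  show ?case
  proof (cases "i = Suc k")
    case True then show ?thesis by simp
  next
    case False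
    then have ik: "i \<le> k" using Suc.prems by simp
    have l: "real k \<le> lam" using Suc.prems by simp
    have "lam ^ i / fact i \<le> lam ^ k / fact k" using Suc.IH[OF ik l] .
    also have "\<dots> \<le> lam ^ k / fact k * (lam / real (Suc k))"
    proof -
      have "1 \<le> lam / real (Suc k)" using Suc.prems by simp
      moreover have "0 \<le> lam ^ k / fact k" using l by simp
      ultimately show ?thesis using mult_left_mono[of 1 "lam / real (Suc k)" "lam ^ k / fact k"] by simp
    qed
    also have "\<dots> = lam ^ Suc k / fact (Suc k)" by (simp add: field_simps)
    finally show ?thesis .
  qed
qed

lemma poisson_lower:
  fixes lam :: real
  assumes "real k \<le> lam"
  shows "(\<Sum>j\<le>k. lam ^ j / fact j * exp (- lam)) \<le> (real k + 1) * (lam ^ k / fact k) * exp (- lam)"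
proof -
  have "(\<Sum>j\<le>k. lam ^ j / fact j * exp (- lam)) \<le> (\<Sum>j\<le>k. lam ^ k / fact k * exp (- lam))"
    using assms by (intro sum_mono mult_right_mono poisson_terms_mono) auto
  also have "\<dots> = (real k + 1) * (lam ^ k / fact k) * exp (- lam)" by simp
  finally show ?thesis .
qed

lemma powr_step:
  fixes x \<beta> :: real
  assumes x: "x \<ge> 0" and b: "0 < \<beta>" "\<beta> < 1"
  shows "(1 - \<beta>) * (x + 1) powr (- \<beta>) \<le> (x + 1) powr (1 - \<beta>) - x powr (1 - \<beta>)"
proof (cases "x = 0")
  case True
  then show ?thesis using b by simp
next
  case False
  then have xp: "x > 0" using x by simp
  have der: "\<And>t. x \<le> t \<Longrightarrow> t \<le> x + 1 \<Longrightarrow> ((\<lambda>t. t powr (1 - \<beta>)) has_real_derivative (1 - \<beta>) * t powr (1 - \<beta> - 1)) (at t)"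
    using xp by (intro has_real_derivative_powr) auto
  obtain z where z: "x < z" "z < x + 1"
    "(x + 1) powr (1 - \<beta>) - x powr (1 - \<beta>) = (x + 1 - x) * ((1 - \<beta>) * z powr (1 - \<beta> - 1))"
    using MVT2[of x "x + 1", OF _ der] by auto
  have "(x + 1) powr (- \<beta>) \<le> z powr (- \<beta>)"
    using z xp b by (intro powr_mono2') auto
  then have "(1 - \<beta>) * (x + 1) powr (- \<beta>) \<le> (1 - \<beta>) * z powr (- \<beta>)"
    using b by (intro mult_left_mono) auto
  then show ?thesis using z(3) by simp
qed

lemma powr_sum_bound:
  fixes \<beta> :: real
  assumes b: "0 < \<beta>" "\<beta> < 1"
  shows "(\<Sum>j\<in>{1..n}. real j powr (- \<beta>)) \<le> real n powr (1 - \<beta>) / (1 - \<beta>)"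
proof (induction n)
  case 0
  then show ?case by simp
next
  case (Suc n)
  have "(\<Sum>j\<in>{1..Suc n}. real j powr (- \<beta>)) = (\<Sum>j\<in>{1..n}. real j powr (- \<beta>)) + real (Suc n) powr (- \<beta>)"
    by simp
  also have "\<dots> \<le> real n powr (1 - \<beta>) / (1 - \<beta>) + real (Suc n) powr (- \<beta>)"
    using Suc by simp
  also have "\<dots> \<le> real (Suc n) powr (1 - \<beta>) / (1 - \<beta>)"
  proof -
    have h: "(1 - \<beta>) * (real n + 1) powr (- \<beta>) \<le> (real n + 1) powr (1 - \<beta>) - real n powr (1 - \<beta>)"
      using powr_step[of "real n" \<beta>] b by simp
    have "(real n + 1) powr (- \<beta>) \<le> ((real n + 1) powr (1 - \<beta>) - real n powr (1 - \<beta>)) / (1 - \<beta>)"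
      using h b by (simp add: field_simps)
    then have "(real n + 1) powr (- \<beta>) \<le> (real n + 1) powr (1 - \<beta>) / (1 - \<beta>) - real n powr (1 - \<beta>) / (1 - \<beta>)"
      by (simp add: diff_divide_distrib)
    then show ?thesis by (simp add: add.commute)
  qed
  finally show ?case .
qed

lemma inv_sq_sum: "(\<Sum>j\<in>{2..n}. 1 / (real j)\<^sup>2) \<le> 1 - 1 / real (max 1 n)"
proof (induction n)
  case 0
  then show ?case by simp
next
  case (Suc n)
  show ?case
  proof (cases "n = 0")
    case True
    then show ?thesis by simp
  next
    case False
    have "(\<Sum>j\<in>{2..Suc n}. 1 / (real j)\<^sup>2) = (\<Sum>j\<in>{2..n}. 1 / (real j)\<^sup>2) + 1 / (real (Suc n))\<^sup>2"
      using False by simp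
    also have "\<dots> \<le> 1 - 1 / real n + 1 / (real (Suc n))\<^sup>2"
      using Suc False by (simp add: max_def)
    also have "\<dots> \<le> 1 - 1 / real (Suc n)"
    proof -
      have "1 / (real (Suc n))\<^sup>2 \<le> 1 / real n - 1 / real (Suc n)"
      proof -
        have np: "0 < real n" using False by simp
        have "1 / real n - 1 / real (Suc n) = 1 / (real n * (real n + 1))"
          using np by (simp add: field_simps)
        moreover have "1 / (real (Suc n))\<^sup>2 \<le> 1 / (real n * (real n + 1))"
        proof (rule divide_left_mono)
          show "real n * (real n + 1) \<le> (real (Suc n))\<^sup>2" by (simp add: power2_eq_square algebra_simps)
          show "0 < (real (Suc n))\<^sup>2 * (real n * (real n + 1))" using np by simp
        qed simp
        ultimately show ?thesis by simp
      qed
      then show ?thesis by simp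
    qed
    finally show ?thesis by simp
  qed
qed

lemma dc_finite_iff:
  fixes W :: "nat \<Rightarrow> real"
  assumes dec: "\<And>i j. i < j \<Longrightarrow> W j < W i"
    and fin: "finite {i. W i > a}"
  shows "W j > a \<longleftrightarrow> j < ppp_count W {a<..}"
proof -
  let ?S = "{i. W i > a}"
  have cnt: "ppp_count W {a<..} = card ?S" by (simp add: ppp_count_def)
  show ?thesis
  proof
    assume "W j > a"
    have "{..j} \<subseteq> ?S"
    proof
      fix i assume "i \<in> {..j}"
      then have "W j \<le> W i" using dec[of i j] by (cases "i = j") auto
      then show "i \<in> ?S" using \<open>W j > a\<close> by simp
    qed
    then have "card {..j} \<le> card ?S" using fin by (rule card_mono[rotated])
    then show "j < ppp_count W {a<..}" using cnt by simp
  next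
    assume j: "j < ppp_count W {a<..}"
    show "W j > a"
    proof (rule ccontr)
      assume "\<not> W j > a"
      have "?S \<subseteq> {..<j}"
      proof
        fix i assume i: "i \<in> ?S"
        show "i \<in> {..<j}"
        proof (rule ccontr)
          assume "i \<notin> {..<j}"
          then have "j \<le> i" by simp
          then have "W i \<le> W j" using dec[of j i] by (cases "j = i") auto
          then show False using i \<open>\<not> W j > a\<close> by simp
        qed
      qed
      then have "card ?S \<le> j" using card_mono[of "{..<j}" ?S] by simp
      then show False using j cnt by simp
    qed
  qed
qed

lemma dc_finite_mono:
  fixes W :: "nat \<Rightarrow> real"
  assumes "0 < ppp_count W {a0<..}" "a0 \<le> a"
  shows "finite {i. W i > a}"
proof -
  have "finite {i. W i > a0}" using assms(1) card.infinite by (force simp: ppp_count_def)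
  moreover have "{i. W i > a} \<subseteq> {i. W i > a0}" using assms(2) by auto
  ultimately show ?thesis by (rule finite_subset[rotated])
qed

lemma pointwise_good:
  fixes W :: "nat \<Rightarrow> real" and b \<beta> A B a0 :: real and N m J J0 :: nat
  assumes dec: "\<And>i j. i < j \<Longrightarrow> W j < W i" and pos: "\<And>i. 0 < W i"
    and b: "b \<ge> 2" and beta: "0 < \<beta>" "\<beta> < 1"
    and Nm: "N \<le> m" and A: "A > 0" and B: "B > 0"
    and J: "1 \<le> J0" "J0 < J" "J \<le> m"
    and a0: "a0 > 0" "a0 \<le> 2 * A / real m" "a0 \<le> B" "a0 \<le> 1 / (8 * real J)"
    and g0: "0 < ppp_count W {a0<..}"
    and g1: "ppp_count W {B<..} = 0"
    and g2: "\<forall>j\<in>{2..<m}. ppp_count W {2 * A / real j<..} \<le> j"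
    and g3: "\<forall>j\<in>{J0..<J}. j < ppp_count W {1 / (8 * real j)<..}"
  shows "(\<Sum>xs\<in>draws m N. draw_prob \<beta> W m xs * (\<Sum>k=2..N. eta W xs k powr b))
     \<le> min 1 ((W 1)\<^sup>2 / (\<Sum>j\<in>{J0..<J}. 1 / (8 * real j))\<^sup>2)
        + 4 * A\<^sup>2 / (\<Sum>j\<in>{J0..<J}. 1 / (8 * real j))\<^sup>2
        + real J * exp (- real N * ((1 / (8 * real J)) powr \<beta>
             / (2 * B powr \<beta> + (2 * A) powr \<beta> * real m powr (1 - \<beta>) / (1 - \<beta>))))"
proof -
  define s where "s = (\<Sum>j\<in>{J0..<J}. 1 / (8 * real j))"
  define Dmax where "Dmax = 2 * B powr \<beta> + (2 * A) powr \<beta> * real m powr (1 - \<beta>) / (1 - \<beta>)"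
  define Dtot where "Dtot = (\<Sum>j<m. W j powr \<beta>)"
  define Q where "Q = (\<Sum>j\<in>{1..<m}. (W j)\<^sup>2)"
  define F where "F = (\<lambda>xs. (\<Sum>k=2..N. eta W xs k powr b))"
  have m2: "2 \<le> m" using J by simp
  have fin: "finite {i. W i > a}" if "a0 \<le> a" for a
    using dc_finite_mono[OF g0 that] .
  have W0: "W 0 \<le> B"
  proof (rule ccontr)
    assume "\<not> W 0 \<le> B"
    then have "0 < ppp_count W {B<..}" using dc_finite_iff[OF dec fin[OF a0(3)], of 0] by simp
    then show False using g1 by simp
  qed
  have Wup: "W j \<le> 2 * A / real j" if j: "j \<in> {2..<m}" for j
  proof (rule ccontr)
    assume "\<not> W j \<le> 2 * A / real j"
    moreover have aj: "a0 \<le> 2 * A / real j"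
    proof -
      have "2 * A / real m \<le> 2 * A / real j" using j A by (intro divide_left_mono) auto
      then show ?thesis using a0(2) by simp
    qed
    ultimately have "j < ppp_count W {2 * A / real j<..}" using dc_finite_iff[OF dec fin[OF aj], of j] by simp
    moreover have "ppp_count W {2 * A / real j<..} \<le> j" using g2 j by blast
    ultimately show False by simp
  qed
  have Wlo: "W j > 1 / (8 * real j)" if j: "j \<in> {J0..<J}" for j
  proof -
    have "a0 \<le> 1 / (8 * real j)"
    proof -
      have "1 / (8 * real J) \<le> 1 / (8 * real j)" using j J by (intro divide_left_mono) auto
      then show ?thesis using a0(4) by simp
    qed
    then have "(1 / (8 * real j) < W j) = (j < ppp_count W {1 / (8 * real j)<..})"
      using dc_finite_iff[OF dec fin, of "1 / (8 * real j)" j] by simp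
    then show ?thesis using g3 j by blast
  qed
  have Wnn: "0 \<le> W j" for j using pos[of j] by simp
  have Bb: "0 \<le> B powr \<beta>" by simp
  have Dtot_le: "Dtot \<le> Dmax"
  proof -
    have split: "{..<m} = {0, 1} \<union> {2..<m}" using m2 by auto
    have "Dtot = W 0 powr \<beta> + W 1 powr \<beta> + (\<Sum>j\<in>{2..<m}. W j powr \<beta>)"
      unfolding Dtot_def split by (subst sum.union_disjoint) auto
    also have "W 0 powr \<beta> \<le> B powr \<beta>" using W0 beta Wnn by (intro powr_mono2) auto
    also have "W 1 powr \<beta> \<le> B powr \<beta>" using W0 dec[of 0 1] beta Wnn by (intro powr_mono2) auto
    also have "(\<Sum>j\<in>{2..<m}. W j powr \<beta>) \<le> (\<Sum>j\<in>{2..<m}. (2 * A) powr \<beta> * real j powr (- \<beta>))"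
    proof (rule sum_mono)
      fix j assume j: "j \<in> {2..<m}"
      have "W j powr \<beta> \<le> (2 * A / real j) powr \<beta>" using Wup[OF j] beta Wnn by (intro powr_mono2) auto
      also have "\<dots> = (2 * A) powr \<beta> * real j powr (- \<beta>)"
        using A j by (simp add: powr_divide powr_minus_divide)
      finally show "W j powr \<beta> \<le> (2 * A) powr \<beta> * real j powr (- \<beta>)" .
    qed
    also have "\<dots> = (2 * A) powr \<beta> * (\<Sum>j\<in>{2..<m}. real j powr (- \<beta>))"
      by (simp add: sum_distrib_left)
    also have "(\<Sum>j\<in>{2..<m}. real j powr (- \<beta>)) \<le> (\<Sum>j\<in>{1..m}. real j powr (- \<beta>))"
      by (rule sum_mono2) auto
    also have "\<dots> \<le> real m powr (1 - \<beta>) / (1 - \<beta>)" by (rule powr_sum_bound[OF beta])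
    finally show ?thesis unfolding Dmax_def using A by (simp add: mult_left_mono)
  qed
  have Dtot_pos: "0 < Dtot"
  proof -
    have "\<And>j. 0 < W j powr \<beta>" using pos by (metis powr_gt_zero less_irrefl)
    moreover have "(0::nat) \<in> {..<m}" using m2 by simp
    then have "{..<m} \<noteq> {}" by blast
    ultimately show ?thesis unfolding Dtot_def by (intro sum_pos) auto
  qed
  have Q_le: "Q \<le> (W 1)\<^sup>2 + 4 * A\<^sup>2"
  proof -
    have split: "{1..<m} = {1} \<union> {2..<m}" using m2 by auto
    have Qe: "Q = (W 1)\<^sup>2 + (\<Sum>j\<in>{2..<m}. (W j)\<^sup>2)"
      unfolding Q_def split by (subst sum.union_disjoint) auto
    have s1: "(\<Sum>j\<in>{2..<m}. (W j)\<^sup>2) \<le> (\<Sum>j\<in>{2..<m}. 4 * A\<^sup>2 * (1 / (real j)\<^sup>2))"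
    proof (rule sum_mono)
      fix j assume j: "j \<in> {2..<m}"
      have "(W j)\<^sup>2 \<le> (2 * A / real j)\<^sup>2" using Wup[OF j] Wnn by (intro power_mono) auto
      then show "(W j)\<^sup>2 \<le> 4 * A\<^sup>2 * (1 / (real j)\<^sup>2)" by (simp add: power_divide)
    qed
    have s2: "(\<Sum>j\<in>{2..<m}. 4 * A\<^sup>2 * (1 / (real j)\<^sup>2)) = 4 * A\<^sup>2 * (\<Sum>j\<in>{2..<m}. 1 / (real j)\<^sup>2)"
      by (simp add: sum_distrib_left)
    have s3: "(\<Sum>j\<in>{2..<m}. 1 / (real j)\<^sup>2) \<le> 1"
    proof -
      have "{2..<m} = {2..m - 1}" using m2 by auto
      then have "(\<Sum>j\<in>{2..<m}. 1 / (real j)\<^sup>2) \<le> 1 - 1 / real (max 1 (m - 1))"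
        using inv_sq_sum[of "m - 1"] by simp
      also have "\<dots> \<le> 1" by simp
      finally show ?thesis .
    qed
    have "4 * A\<^sup>2 * (\<Sum>j\<in>{2..<m}. 1 / (real j)\<^sup>2) \<le> 4 * A\<^sup>2 * 1"
      using s3 by (intro mult_left_mono) auto
    then show ?thesis using Qe s1 s2 by linarith
  qed
  have s_pos: "0 < s" unfolding s_def using J by (intro sum_pos) auto
  have Fgood: "F xs \<le> min 1 (Q / s\<^sup>2)" if xs: "xs \<in> draws m N" and G: "{..<J} \<subseteq> set xs" for xs
  proof -
    have S: "s \<le> (\<Sum>x\<in>set xs. W x)"
    proof -
      have "s \<le> (\<Sum>j\<in>{J0..<J}. W j)" unfolding s_def using Wlo by (intro sum_mono) (auto intro: less_imp_le)
      also have "\<dots> \<le> (\<Sum>x\<in>set xs. W x)" using G Wnn by (intro sum_mono2) auto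
      finally show ?thesis .
    qed
    have "F xs \<le> Q / (\<Sum>x\<in>set xs. W x)\<^sup>2" unfolding F_def Q_def by (rule eta_sum_bound(2)[OF dec pos xs b])
    also have "\<dots> \<le> Q / s\<^sup>2"
    proof (rule divide_left_mono)
      show "s\<^sup>2 \<le> (\<Sum>x\<in>set xs. W x)\<^sup>2" using S s_pos by (intro power_mono) auto
      show "0 \<le> Q" unfolding Q_def by (intro sum_nonneg) auto
      show "0 < (\<Sum>x\<in>set xs. W x)\<^sup>2 * s\<^sup>2" using S s_pos by simp
    qed
    finally show ?thesis using eta_sum_bound(1)[OF dec pos xs b] unfolding F_def by simp
  qed
  have F01: "0 \<le> F xs \<and> F xs \<le> 1" if xs: "xs \<in> draws m N" for xs
    using eta_sum_bound(1)[OF dec pos xs b] unfolding F_def by (auto intro: sum_nonneg)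
  have avg: "(\<Sum>xs\<in>draws m N. draw_prob \<beta> W m xs * F xs)
      \<le> min 1 (Q / s\<^sup>2) + (\<Sum>i\<in>{..<J}. (1 - W i powr \<beta> / (\<Sum>j<m. W j powr \<beta>)) ^ N)"
  proof (rule draws_avg_bound[OF pos Nm _ F01 Fgood])
    have "0 \<le> Q" unfolding Q_def by (intro sum_nonneg) auto
    then show "0 \<le> min 1 (Q / s\<^sup>2)" by simp
  qed (use J in auto)
  define q where "q = (1 / (8 * real J)) powr \<beta> / Dmax"
  have Dmax_pos: "0 < Dmax" using Dtot_le Dtot_pos by simp
  have miss: "(1 - W i powr \<beta> / Dtot) ^ N \<le> exp (- real N * q)" if i: "i < J" for i
  proof -
    have "J - 1 \<in> {J0..<J}" using J by auto
    then have "W (J - 1) > 1 / (8 * real (J - 1))" by (rule Wlo)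
    moreover have "1 / (8 * real J) \<le> 1 / (8 * real (J - 1))" using J by (intro divide_left_mono) auto
    moreover have "W (J - 1) \<le> W i"
    proof (cases "i = J - 1")
      case False
      then have "i < J - 1" using i by simp
      then show ?thesis using dec[of i "J - 1"] by simp
    qed simp
    ultimately have Wi: "1 / (8 * real J) \<le> W i" by simp
    have "q \<le> W i powr \<beta> / Dmax" unfolding q_def using Wi beta Dmax_pos
      by (intro divide_right_mono powr_mono2) auto
    also have "\<dots> \<le> W i powr \<beta> / Dtot" using Dtot_le Dtot_pos by (intro divide_left_mono) auto
    finally have qp: "q \<le> W i powr \<beta> / Dtot" .
    have "W i powr \<beta> \<le> Dtot" unfolding Dtot_def using i J by (intro member_le_sum) auto
    then have p1: "W i powr \<beta> / Dtot \<le> 1" using Dtot_pos by simp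
    have "(1 - W i powr \<beta> / Dtot) ^ N \<le> (exp (- q)) ^ N"
    proof (rule power_mono)
      show "1 - W i powr \<beta> / Dtot \<le> exp (- q)" using qp exp_ge_add_one_self[of "- q"] by linarith
      show "0 \<le> 1 - W i powr \<beta> / Dtot" using p1 by simp
    qed
    also have "\<dots> = exp (- real N * q)" by (simp add: exp_of_nat_mult[symmetric] mult.commute)
    finally show ?thesis .
  qed
  have "(\<Sum>i\<in>{..<J}. (1 - W i powr \<beta> / (\<Sum>j<m. W j powr \<beta>)) ^ N) \<le> (\<Sum>i\<in>{..<J}. exp (- real N * q))"
    using miss unfolding Dtot_def by (intro sum_mono) auto
  also have "\<dots> = real J * exp (- real N * q)" by simp
  finally have missum: "(\<Sum>i\<in>{..<J}. (1 - W i powr \<beta> / (\<Sum>j<m. W j powr \<beta>)) ^ N) \<le> real J * exp (- real N * q)" .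
  have minb: "min 1 (Q / s\<^sup>2) \<le> min 1 ((W 1)\<^sup>2 / s\<^sup>2) + 4 * A\<^sup>2 / s\<^sup>2"
  proof -
    have "Q / s\<^sup>2 \<le> (W 1)\<^sup>2 / s\<^sup>2 + 4 * A\<^sup>2 / s\<^sup>2"
      using Q_le s_pos by (simp add: add_divide_distrib[symmetric] divide_right_mono)
    moreover have "0 \<le> 4 * A\<^sup>2 / s\<^sup>2" by simp
    ultimately show ?thesis unfolding min_def by (split if_split)+ linarith
  qed
  show ?thesis
    using avg missum minb unfolding F_def s_def[symmetric] q_def Dmax_def by simp
qed

lemma layer_bound:
  fixes W :: "nat \<Rightarrow> real" and s :: real and K0 :: nat
  assumes dec: "\<And>i j. i < j \<Longrightarrow> W j < W i" and pos: "\<And>i. 0 < W i"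
    and s: "s > 0" and g0: "0 < ppp_count W {a0<..}" and a0: "a0 \<le> 1"
  shows "min 1 ((W 1)\<^sup>2 / s\<^sup>2) \<le> 1 / s\<^sup>2
     + (\<Sum>k<K0. exp (2 * real k + 2) / s\<^sup>2 * (if 2 \<le> ppp_count W {exp (real k)<..} then 1 else 0))
     + (if 2 \<le> ppp_count W {exp (real K0)<..} then 1 else 0)"
proof -
  have fin: "finite {i. W i > a}" if "a0 \<le> a" for a
    using dc_finite_mono[OF g0 that] .
  have key: "exp (real k) < W 1 \<longleftrightarrow> 2 \<le> ppp_count W {exp (real k)<..}" for k
  proof -
    have "1 \<le> exp (real k)" by simp
    then have "a0 \<le> exp (real k)" using a0 by linarith
    from dc_finite_iff[OF dec fin[OF this], of 1]
    have "exp (real k) < W 1 \<longleftrightarrow> 1 < ppp_count W {exp (real k)<..}" by simp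
    then show ?thesis by linarith
  qed
  define T where "T = (\<Sum>k<K0. exp (2 * real k + 2) / s\<^sup>2 * (if 2 \<le> ppp_count W {exp (real k)<..} then 1 else 0::real))"
  have Tnn: "0 \<le> T" unfolding T_def by (intro sum_nonneg) auto
  have I1: "0 \<le> (if 2 \<le> ppp_count W {exp (real K0)<..} then 1 else 0::real)" by simp
  have "min 1 ((W 1)\<^sup>2 / s\<^sup>2) \<le> 1 / s\<^sup>2 + T + (if 2 \<le> ppp_count W {exp (real K0)<..} then 1 else 0)"
  proof (cases "W 1 \<le> 1")
    case True
    then have "(W 1)\<^sup>2 \<le> 1" using pos[of 1] by (intro power_le_one) auto
    then have "(W 1)\<^sup>2 / s\<^sup>2 \<le> 1 / s\<^sup>2" using s by (intro divide_right_mono) auto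
    then show ?thesis using Tnn I1 by linarith
  next
    case False
    show ?thesis
    proof (cases "exp (real K0) < W 1")
      case True
      then have "(if 2 \<le> ppp_count W {exp (real K0)<..} then 1 else 0::real) = 1" using key by simp
      moreover have "0 \<le> 1 / s\<^sup>2" by simp
      ultimately show ?thesis using Tnn by linarith
    next
      case le: False
      define c where "c = \<lceil>ln (W 1)\<rceil>"
      have lnp: "0 < ln (W 1)" using False by simp
      have c1: "1 \<le> c" unfolding c_def using lnp by linarith
      have "ln (W 1) \<le> ln (exp (real K0))" using le pos[of 1] by (subst ln_le_cancel_iff) auto
      then have "ln (W 1) \<le> real K0" by simp
      then have cK: "c \<le> int K0" unfolding c_def by (simp add: ceiling_le_iff)
      define k where "k = nat c - 1"
      have kK: "k < K0" unfolding k_def using c1 cK by linarith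
      have k1: "real k + 1 = of_int c" unfolding k_def using c1 by linarith
      have lo: "exp (real k) < W 1"
      proof -
        have "real k < ln (W 1)" unfolding k_def c_def using c1 c_def by linarith
        then show ?thesis using pos[of 1] by (metis exp_less_mono exp_ln)
      qed
      have hi: "W 1 \<le> exp (real k + 1)"
      proof -
        have "ln (W 1) \<le> real k + 1" using k1 unfolding c_def by linarith
        then show ?thesis using pos[of 1] by (metis exp_le_cancel_iff exp_ln)
      qed
      have "(W 1)\<^sup>2 \<le> (exp (real k + 1))\<^sup>2" using hi pos[of 1] by (intro power_mono) auto
      also have "\<dots> = exp (2 * real k + 2)" by (simp add: exp_double[symmetric] algebra_simps power2_eq_square exp_add[symmetric])
      finally have "(W 1)\<^sup>2 / s\<^sup>2 \<le> exp (2 * real k + 2) / s\<^sup>2" using s by (intro divide_right_mono) auto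
      also have "\<dots> = exp (2 * real k + 2) / s\<^sup>2 * (if 2 \<le> ppp_count W {exp (real k)<..} then 1 else 0)"
        using lo key by simp
      also have "\<dots> \<le> T" unfolding T_def using kK
        by (intro member_le_sum[of k "{..<K0}" "\<lambda>k. exp (2 * real k + 2) / s\<^sup>2 * (if 2 \<le> ppp_count W {exp (real k)<..} then 1 else 0::real)"]) auto
      finally have "(W 1)\<^sup>2 / s\<^sup>2 \<le> T" .
      moreover have "0 \<le> 1 / s\<^sup>2" by simp
      ultimately show ?thesis using I1 by linarith
    qed
  qed
  then show ?thesis unfolding T_def .
qed

lemma harmonic_lower:
  assumes "1 \<le> a" "a \<le> b"
  shows "ln (real b) - ln (real a) \<le> (\<Sum>j\<in>{a..<b}. 1 / real j)"
  using assms(2)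
proof (induction b rule: dec_induct)
  case base
  then show ?case by simp
next
  case (step n)
  have n1: "1 \<le> n" using assms(1) step.hyps by simp
  have "ln (real (Suc n)) - ln (real n) = ln (real (Suc n) / real n)"
    using n1 by (simp add: ln_div)
  also have "ln (real (Suc n) / real n) = ln (1 + 1 / real n)" using n1 by (simp add: field_simps)
  also have "\<dots> \<le> 1 / real n" using n1 by (intro ln_add_one_self_le_self) auto
  finally have "ln (real (Suc n)) - ln (real n) \<le> 1 / real n" .
  moreover have "(\<Sum>j\<in>{a..<Suc n}. 1 / real j) = (\<Sum>j\<in>{a..<n}. 1 / real j) + 1 / real n"
    using step.hyps by simp
  ultimately show ?case using step.IH by linarith
qed

lemma geom_tail:
  fixes r :: real
  assumes "0 \<le> r" "r < 1"
  shows "(\<Sum>j\<in>{a..<b}. r ^ j) \<le> r ^ a / (1 - r)"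
proof (cases "a \<le> b")
  case True
  have "(\<Sum>j\<in>{a..<b}. r ^ j) = (\<Sum>i<b - a. r ^ (a + i))"
    by (rule sum.reindex_bij_witness[where j="\<lambda>j. j - a" and i="\<lambda>i. a + i"]) (use True in auto)
  also have "\<dots> = r ^ a * (\<Sum>i<b - a. r ^ i)" by (simp add: power_add sum_distrib_left)
  also have "(\<Sum>i<b - a. r ^ i) = (1 - r ^ (b - a)) / (1 - r)"
    using assms by (simp add: sum_gp_strict)
  also have "\<dots> \<le> 1 / (1 - r)" using assms by (intro divide_right_mono) auto
  finally show ?thesis using assms by (simp add: mult_left_mono)
next
  case False
  then show ?thesis using assms by simp
qed

lemma up_numeric:
  fixes A :: real and j :: nat
  assumes A: "A > 0"
  shows "(real j / (2 * A)) ^ (j + 1) / fact (j + 1) \<le> (exp 1 / (2 * A)) ^ (j + 1)"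
proof -
  have "(real j / (2 * A)) ^ (j + 1) \<le> (real (j + 1) / (2 * A)) ^ (j + 1)"
    using A by (intro power_mono divide_right_mono) auto
  then have "(real j / (2 * A)) ^ (j + 1) / fact (j + 1) \<le> (real (j + 1) / (2 * A)) ^ (j + 1) / fact (j + 1)"
    by (intro divide_right_mono) auto
  also have "\<dots> = (1 / (2 * A)) ^ (j + 1) * (real (j + 1) ^ (j + 1) / fact (j + 1))"
    by (simp add: power_divide)
  also have "\<dots> \<le> (1 / (2 * A)) ^ (j + 1) * exp (real (j + 1))"
    using A by (intro mult_left_mono exp_ge_term) auto
  also have "exp (real (j + 1)) = exp 1 ^ (j + 1)" using exp_of_nat_mult[of "j + 1" 1] by simp
  also have "(1 / (2 * A)) ^ (j + 1) * exp 1 ^ (j + 1) = (exp 1 / (2 * A)) ^ (j + 1)"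
    by (simp add: power_divide)
  finally show ?thesis .
qed

lemma lo_numeric:
  fixes j :: nat
  shows "(real j + 1) * ((8 * real j) ^ j / fact j) * exp (- (8 * real j)) \<le> (1 / 2) ^ j"
proof -
  have e7: "128 \<le> exp (7::real)"
  proof -
    have "(2::real) ^ 7 \<le> exp 1 ^ 7" using exp_ge_add_one_self[of 1] by (intro power_mono) auto
    also have "exp 1 ^ 7 = exp (7::real)" by (simp add: exp_of_nat_mult[symmetric])
    finally show ?thesis by simp
  qed
  have "(8 * real j) ^ j / fact j = 8 ^ j * (real j ^ j / fact j)" by (simp add: power_mult_distrib)
  also have "\<dots> \<le> 8 ^ j * exp (real j)" by (intro mult_left_mono exp_ge_term) auto
  finally have f: "(8 * real j) ^ j / fact j \<le> 8 ^ j * exp (real j)" .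
  have "(real j + 1) * ((8 * real j) ^ j / fact j) * exp (- (8 * real j))
      \<le> (real j + 1) * (8 ^ j * exp (real j)) * exp (- (8 * real j))"
    by (intro mult_right_mono mult_left_mono f) auto
  also have "\<dots> = (real j + 1) * (8 / exp 7) ^ j"
  proof -
    have "exp (real j) * exp (- (8 * real j)) = exp (- 7 * real j)" by (simp add: exp_add[symmetric])
    also have "\<dots> = exp (- 7) ^ j" using exp_of_nat_mult[of j "- 7"] by (simp add: mult.commute)
    also have "\<dots> = inverse (exp 7) ^ j" by (simp add: exp_minus)
    finally show ?thesis by (simp add: power_divide divide_inverse power_mult_distrib mult.assoc)
  qed
  also have "\<dots> \<le> (real j + 1) * (1 / 16) ^ j"
    using e7 by (intro mult_left_mono power_mono) (auto simp: divide_simps)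
  also have "\<dots> \<le> (1 / 2) ^ j"
  proof -
    have "real j + 1 \<le> 8 ^ j"
    proof (induction j)
      case (Suc j)
      have "1 \<le> (8::real) ^ j" by simp
      then show ?case using Suc by simp
    qed simp
    then have "(real j + 1) * (1 / 16) ^ j \<le> 8 ^ j * (1 / 16) ^ j" by (intro mult_right_mono) auto
    also have "\<dots> = (1 / 2) ^ j" by (simp add: power_mult_distrib[symmetric])
    finally show ?thesis .
  qed
  finally show ?thesis .
qed

lemma ppp_set:
  assumes ppp: "is_ppp_atoms M w" and a: "a > 0"
  shows "{\<omega>\<in>space M. P (ppp_count (w \<omega>) {a<..})} \<in> sets M"
proof -
  have X: "(\<lambda>\<omega>. ppp_count (w \<omega>) {a<..}) \<in> measurable M (count_space UNIV)"
    by (rule ppp_basic(2)[OF ppp a])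
  have "(\<lambda>\<omega>. ppp_count (w \<omega>) {a<..}) -` {n. P n} \<inter> space M \<in> sets M"
    by (rule measurable_sets[OF X]) simp
  moreover have "(\<lambda>\<omega>. ppp_count (w \<omega>) {a<..}) -` {n. P n} \<inter> space M = {\<omega>\<in>space M. P (ppp_count (w \<omega>) {a<..})}"
    by auto
  ultimately show ?thesis by simp
qed

lemma ppp_ge:
  assumes ppp: "is_ppp_atoms M w" and a: "a > 0"
  shows "measure M {\<omega>\<in>space M. k \<le> ppp_count (w \<omega>) {a<..}} \<le> (1 / a) ^ k / fact k"
proof -
  have "measure M {\<omega>\<in>space M. k \<le> ppp_count (w \<omega>) {a<..}}
      = 1 - (\<Sum>j<k. measure M {\<omega>\<in>space M. ppp_count (w \<omega>) {a<..} = j})"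
    by (rule nat_rv_ge[OF ppp_basic(1,2)[OF ppp a]])
  also have "\<dots> = 1 - (\<Sum>j<k. (1/a)^j / fact j * exp (- (1/a)))"
    using ppp_basic(3)[OF ppp a] by simp
  also have "\<dots> \<le> (1 / a) ^ k / fact k" using a by (intro poisson_upper) auto
  finally show ?thesis .
qed

lemma ppp_le:
  assumes ppp: "is_ppp_atoms M w" and a: "a > 0" and k: "real k \<le> 1 / a"
  shows "measure M {\<omega>\<in>space M. ppp_count (w \<omega>) {a<..} \<le> k} \<le> (real k + 1) * ((1 / a) ^ k / fact k) * exp (- (1 / a))"
proof -
  have "measure M {\<omega>\<in>space M. ppp_count (w \<omega>) {a<..} \<le> k}
      = (\<Sum>j\<le>k. measure M {\<omega>\<in>space M. ppp_count (w \<omega>) {a<..} = j})"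
    by (rule nat_rv_le[OF ppp_basic(1,2)[OF ppp a]])
  also have "\<dots> = (\<Sum>j\<le>k. (1/a)^j / fact j * exp (- (1/a)))"
    using ppp_basic(3)[OF ppp a] by simp
  also have "\<dots> \<le> (real k + 1) * ((1 / a) ^ k / fact k) * exp (- (1 / a))"
    by (rule poisson_lower[OF k])
  finally show ?thesis .
qed

lemma ppp_zero:
  assumes ppp: "is_ppp_atoms M w" and a: "a > 0"
  shows "measure M {\<omega>\<in>space M. ppp_count (w \<omega>) {a<..} \<le> 0} = exp (- (1 / a))"
proof -
  have "measure M {\<omega>\<in>space M. ppp_count (w \<omega>) {a<..} \<le> 0}
      = (\<Sum>j\<le>0. measure M {\<omega>\<in>space M. ppp_count (w \<omega>) {a<..} = j})"
    by (rule nat_rv_le[OF ppp_basic(1,2)[OF ppp a]])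
  also have "\<dots> = exp (- (1 / a))" using ppp_basic(3)[OF ppp a] by simp
  finally show ?thesis .
qed

lemma cond_exp_le1:
  fixes W :: "nat \<Rightarrow> real"
  assumes dec: "\<And>i j. i < j \<Longrightarrow> W j < W i" and pos: "\<And>i. 0 < W i"
    and b: "b \<ge> 2" and Nm: "N \<le> n_avail \<gamma> N"
  shows "0 \<le> cond_exp_eta \<gamma> \<beta> b W N \<and> cond_exp_eta \<gamma> \<beta> b W N \<le> 1"
proof -
  let ?m = "n_avail \<gamma> N"
  have F: "0 \<le> (\<Sum>k=2..N. eta W xs k powr b) \<and> (\<Sum>k=2..N. eta W xs k powr b) \<le> 1"
    if "xs \<in> draws ?m N" for xs
    using eta_sum_bound(1)[OF dec pos that b] by (auto intro: sum_nonneg)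
  have "cond_exp_eta \<gamma> \<beta> b W N \<le> (\<Sum>xs\<in>draws ?m N. draw_prob \<beta> W ?m xs * 1)"
    unfolding cond_exp_eta_def using F by (intro sum_mono mult_left_mono draw_prob_nonneg) auto
  also have "\<dots> = 1" using sum_draw_prob[OF pos Nm] by simp
  finally show ?thesis unfolding cond_exp_eta_def using F
    by (auto intro!: sum_nonneg mult_nonneg_nonneg draw_prob_nonneg)
qed

lemma expectation_bound:
  fixes M :: "'a measure" and w :: "'a \<Rightarrow> nat \<Rightarrow> real" and \<gamma> \<beta> b A B :: real and N J J0 K0 :: nat
  assumes ppp: "is_ppp_atoms M w" and b: "b \<ge> 2" and beta: "0 < \<beta>" "\<beta> < 1"
    and Nm: "N \<le> n_avail \<gamma> N" and A: "exp 1 \<le> A" and B: "1 \<le> B"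
    and J: "1 \<le> J0" "J0 < J" "J \<le> n_avail \<gamma> N"
  defines "m \<equiv> n_avail \<gamma> N"
    and "s \<equiv> (\<Sum>j\<in>{J0..<J}. 1 / (8 * real j))"
    and "Dmax \<equiv> 2 * B powr \<beta> + (2 * A) powr \<beta> * real (n_avail \<gamma> N) powr (1 - \<beta>) / (1 - \<beta>)"
  shows "(\<integral>\<omega>. cond_exp_eta \<gamma> \<beta> b (w \<omega>) N \<partial>M)
     \<le> exp (- (8 * real m)) + 1 / B + 2 * (exp 1 / (2 * A)) ^ 3 + 2 * (1 / 2) ^ J0
       + (real J * exp (- real N * ((1 / (8 * real J)) powr \<beta> / Dmax)) + 4 * A\<^sup>2 / s\<^sup>2 + 1 / s\<^sup>2)
       + real K0 * exp 2 / (2 * s\<^sup>2) + exp (- (2 * real K0)) / 2"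
proof -
  interpret P: prob_space M using ppp by (simp add: is_ppp_atoms_def)
  have Wp: "\<forall>\<omega>\<in>space M. (\<forall>i j. i < j \<longrightarrow> w \<omega> j < w \<omega> i) \<and> (\<forall>i. 0 < w \<omega> i)"
    using ppp unfolding is_ppp_atoms_def by (elim conjE)
  have m2: "2 \<le> m" using J unfolding m_def by simp
  have Apos: "A > 0" using A by (smt (verit) exp_gt_zero)
  define a0 where "a0 = 1 / (8 * real m)"
  have a0p: "a0 > 0" unfolding a0_def using m2 by simp
  define cnt where "cnt = (\<lambda>a \<omega>. ppp_count (w \<omega>) {a<..})"
  define Z where "Z = {\<omega>\<in>space M. cnt a0 \<omega> \<le> 0}"
  define E0 where "E0 = {\<omega>\<in>space M. 1 \<le> cnt B \<omega>}"
  define Up where "Up = (\<lambda>j::nat. {\<omega>\<in>space M. j + 1 \<le> cnt (2 * A / real j) \<omega>})"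
  define Lo where "Lo = (\<lambda>j::nat. {\<omega>\<in>space M. cnt (1 / (8 * real j)) \<omega> \<le> j})"
  define Lay where "Lay = (\<lambda>k::nat. {\<omega>\<in>space M. 2 \<le> cnt (exp (real k)) \<omega>})"
  define Bad where "Bad = Z \<union> E0 \<union> (\<Union>j\<in>{2..<m}. Up j) \<union> (\<Union>j\<in>{J0..<J}. Lo j)"
  have Zs: "Z \<in> sets M" unfolding Z_def cnt_def by (rule ppp_set[OF ppp a0p])
  have E0s: "E0 \<in> sets M" unfolding E0_def cnt_def using B by (intro ppp_set[OF ppp]) auto
  have Ups: "Up j \<in> sets M" if "j \<in> {2..<m}" for j
    unfolding Up_def cnt_def using that Apos by (intro ppp_set[OF ppp]) auto
  have Los: "Lo j \<in> sets M" if "j \<in> {J0..<J}" for j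
    unfolding Lo_def cnt_def using that J by (intro ppp_set[OF ppp]) auto
  have Lays: "Lay k \<in> sets M" for k
    unfolding Lay_def cnt_def by (intro ppp_set[OF ppp]) auto
  have Bads: "Bad \<in> sets M" unfolding Bad_def using Zs E0s Ups Los by auto
  have s_pos: "0 < s" unfolding s_def using J by (intro sum_pos) auto
  define Kc where "Kc = real J * exp (- real N * ((1 / (8 * real J)) powr \<beta> / Dmax)) + 4 * A\<^sup>2 / s\<^sup>2 + 1 / s\<^sup>2"
  define h where "h = (\<lambda>\<omega>. indicator Bad \<omega> + Kc
      + (\<Sum>k<K0. exp (2 * real k + 2) / s\<^sup>2 * indicator (Lay k) \<omega>) + indicator (Lay K0) \<omega>)"
  have iB: "integrable M (indicator Bad :: 'a \<Rightarrow> real)"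
    by (rule integrable_real_indicator[OF Bads]) (simp add: less_top[symmetric] P.emeasure_finite)
  have iL: "integrable M (indicator (Lay k) :: 'a \<Rightarrow> real)" for k
    by (rule integrable_real_indicator[OF Lays]) (simp add: less_top[symmetric] P.emeasure_finite)
  have iS: "integrable M (\<lambda>\<omega>. \<Sum>k<K0. exp (2 * real k + 2) / s\<^sup>2 * indicator (Lay k) \<omega>)"
  proof (rule Bochner_Integration.integrable_sum)
    fix k assume "k \<in> {..<K0}"
    show "integrable M (\<lambda>\<omega>. exp (2 * real k + 2) / s\<^sup>2 * indicator (Lay k) \<omega>)"
      using iL[of k] by (rule Bochner_Integration.integrable_mult_right)
  qed
  have iBK: "integrable M (\<lambda>\<omega>. indicator Bad \<omega> + Kc)"
    using iB P.integrable_const[of Kc] by (rule Bochner_Integration.integrable_add)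
  have iBKS: "integrable M (\<lambda>\<omega>. indicator Bad \<omega> + Kc + (\<Sum>k<K0. exp (2 * real k + 2) / s\<^sup>2 * indicator (Lay k) \<omega>))"
    using iBK iS by (rule Bochner_Integration.integrable_add)
  have int_h: "integrable M h"
    unfolding h_def using iBKS iL[of K0] by (rule Bochner_Integration.integrable_add)
  have h_nn: "0 \<le> h \<omega>" for \<omega>
    unfolding h_def Kc_def by (intro add_nonneg_nonneg sum_nonneg mult_nonneg_nonneg) auto
  have pw: "cond_exp_eta \<gamma> \<beta> b (w \<omega>) N \<le> h \<omega>" if \<omega>: "\<omega> \<in> space M" for \<omega>
  proof -
    define W where "W = w \<omega>"
    have dec: "\<And>i j. i < j \<Longrightarrow> W j < W i" and pos: "\<And>i. 0 < W i"
      using Wp \<omega> unfolding W_def by auto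
    have c01: "cond_exp_eta \<gamma> \<beta> b W N \<le> 1" using cond_exp_le1[OF dec pos b Nm] by simp
    have Lnn: "0 \<le> (\<Sum>k<K0. exp (2 * real k + 2) / s\<^sup>2 * indicator (Lay k) \<omega>)"
      by (intro sum_nonneg mult_nonneg_nonneg) auto
    have Knn: "0 \<le> Kc" unfolding Kc_def by (intro add_nonneg_nonneg) auto
    show ?thesis
    proof (cases "\<omega> \<in> Bad")
      case True
      then show ?thesis using c01 Lnn Knn unfolding h_def W_def by (simp add: indicator_def)
    next
      case False
      have g0: "0 < ppp_count W {a0<..}" using False \<omega> unfolding Bad_def Z_def cnt_def W_def by auto
      have g1: "ppp_count W {B<..} = 0" using False \<omega> unfolding Bad_def E0_def cnt_def W_def by auto
      have g2: "\<forall>j\<in>{2..<m}. ppp_count W {2 * A / real j<..} \<le> j"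
        using False \<omega> unfolding Bad_def Up_def cnt_def W_def by auto
      have g3: "\<forall>j\<in>{J0..<J}. j < ppp_count W {1 / (8 * real j)<..}"
        using False \<omega> unfolding Bad_def Lo_def cnt_def W_def by auto
      have a0A: "a0 \<le> 2 * A / real m"
        unfolding a0_def using Apos m2 A
        by (intro divide_right_mono[of "1/8" "2 * A" "real m", simplified]) (smt (verit) exp_ge_add_one_self)
      have a0B: "a0 \<le> B"
      proof -
        have "1 * 1 \<le> B * (8 * real m)" using B m2 by (intro mult_mono) auto
        then show ?thesis unfolding a0_def using m2 by (simp add: field_simps)
      qed
      have a0J: "a0 \<le> 1 / (8 * real J)" unfolding a0_def using J m2 by (intro divide_left_mono) (auto simp: m_def)
      have a01: "a0 \<le> 1" unfolding a0_def using m2 by simp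
      have PG: "cond_exp_eta \<gamma> \<beta> b W N \<le> min 1 ((W 1)\<^sup>2 / s\<^sup>2) + 4 * A\<^sup>2 / s\<^sup>2
          + real J * exp (- real N * ((1 / (8 * real J)) powr \<beta> / Dmax))"
        unfolding cond_exp_eta_def s_def Dmax_def
        by (rule pointwise_good[OF dec pos b beta Nm Apos _ J a0p _ _ _ g0 g1 _ g3])
           (use B a0A a0B a0J g2 in \<open>auto simp: m_def\<close>)
      have LB: "min 1 ((W 1)\<^sup>2 / s\<^sup>2) \<le> 1 / s\<^sup>2
          + (\<Sum>k<K0. exp (2 * real k + 2) / s\<^sup>2 * (if 2 \<le> ppp_count W {exp (real k)<..} then 1 else 0))
          + (if 2 \<le> ppp_count W {exp (real K0)<..} then 1 else 0)"
        by (rule layer_bound[OF dec pos s_pos g0 a01])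
      have ind: "(if 2 \<le> ppp_count W {exp (real k)<..} then 1 else 0) = indicator (Lay k) \<omega>" for k
        using \<omega> unfolding Lay_def cnt_def W_def by (simp add: indicator_def)
      have "cond_exp_eta \<gamma> \<beta> b W N \<le> Kc
          + (\<Sum>k<K0. exp (2 * real k + 2) / s\<^sup>2 * indicator (Lay k) \<omega>) + indicator (Lay K0) \<omega>"
        using PG LB unfolding ind Kc_def by linarith
      then show ?thesis using False unfolding h_def W_def by simp
    qed
  qed
  have int_le: "(\<integral>\<omega>. cond_exp_eta \<gamma> \<beta> b (w \<omega>) N \<partial>M) \<le> integral\<^sup>L M h"
  proof (cases "integrable M (\<lambda>\<omega>. cond_exp_eta \<gamma> \<beta> b (w \<omega>) N)")
    case True
    then show ?thesis using int_h pw by (intro Bochner_Integration.integral_mono) auto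
  next
    case False
    then have "(\<integral>\<omega>. cond_exp_eta \<gamma> \<beta> b (w \<omega>) N \<partial>M) = 0" by (rule not_integrable_integral_eq)
    moreover have "0 \<le> integral\<^sup>L M h" using h_nn by (intro Bochner_Integration.integral_nonneg) auto
    ultimately show ?thesis by simp
  qed
  have int_h_eq: "integral\<^sup>L M h = measure M Bad + Kc
      + (\<Sum>k<K0. exp (2 * real k + 2) / s\<^sup>2 * measure M (Lay k)) + measure M (Lay K0)"
  proof -
    have "integral\<^sup>L M h = integral\<^sup>L M (\<lambda>\<omega>. indicator Bad \<omega> + Kc
      + (\<Sum>k<K0. exp (2 * real k + 2) / s\<^sup>2 * indicator (Lay k) \<omega>)) + integral\<^sup>L M (indicator (Lay K0))"
      unfolding h_def using iBKS iL[of K0] by (rule Bochner_Integration.integral_add)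
    also have "integral\<^sup>L M (\<lambda>\<omega>. indicator Bad \<omega> + Kc
      + (\<Sum>k<K0. exp (2 * real k + 2) / s\<^sup>2 * indicator (Lay k) \<omega>))
      = integral\<^sup>L M (\<lambda>\<omega>. indicator Bad \<omega> + Kc) + integral\<^sup>L M (\<lambda>\<omega>. \<Sum>k<K0. exp (2 * real k + 2) / s\<^sup>2 * indicator (Lay k) \<omega>)"
      using iBK iS by (rule Bochner_Integration.integral_add)
    also have "integral\<^sup>L M (\<lambda>\<omega>. indicator Bad \<omega> + Kc) = integral\<^sup>L M (indicator Bad) + integral\<^sup>L M (\<lambda>\<omega>. Kc)"
      using iB P.integrable_const[of Kc] by (rule Bochner_Integration.integral_add)
    also have "integral\<^sup>L M (\<lambda>\<omega>. Kc) = Kc" by (simp add: P.prob_space)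
    also have "integral\<^sup>L M (indicator Bad) = measure M Bad" using Bads by (simp add: Int_absorb2 sets.sets_into_space)
    also have "integral\<^sup>L M (\<lambda>\<omega>. \<Sum>k<K0. exp (2 * real k + 2) / s\<^sup>2 * indicator (Lay k) \<omega>)
        = (\<Sum>k<K0. exp (2 * real k + 2) / s\<^sup>2 * measure M (Lay k))"
    proof -
      have "integral\<^sup>L M (\<lambda>\<omega>. \<Sum>k<K0. exp (2 * real k + 2) / s\<^sup>2 * indicator (Lay k) \<omega>)
          = (\<Sum>k<K0. integral\<^sup>L M (\<lambda>\<omega>. exp (2 * real k + 2) / s\<^sup>2 * indicator (Lay k) \<omega>))"
        using iL by (intro Bochner_Integration.integral_sum Bochner_Integration.integrable_mult_right) auto
      also have "\<dots> = (\<Sum>k<K0. exp (2 * real k + 2) / s\<^sup>2 * measure M (Lay k))"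
        using Lays by (intro sum.cong refl) (simp add: Int_absorb2 sets.sets_into_space)
      finally show ?thesis .
    qed
    also have "integral\<^sup>L M (indicator (Lay K0)) = measure M (Lay K0)"
      using Lays by (simp add: Int_absorb2 sets.sets_into_space)
    finally show ?thesis by simp
  qed
  define r where "r = exp 1 / (2 * A)"
  have r0: "0 \<le> r" "r \<le> 1 / 2" unfolding r_def
  proof -
    show "0 \<le> exp 1 / (2 * A)" using Apos by simp
    have "exp 1 / (2 * A) \<le> exp 1 / (2 * exp 1)" using A Apos by (intro divide_left_mono) auto
    then show "exp 1 / (2 * A) \<le> 1 / 2" by simp
  qed
  have PZ: "measure M Z = exp (- (8 * real m))"
    unfolding Z_def cnt_def using ppp_zero[OF ppp a0p] by (simp add: a0_def)
  have PE0: "measure M E0 \<le> 1 / B"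
    unfolding E0_def cnt_def using ppp_ge[OF ppp, of B 1] B by simp
  have PUp: "measure M (Up j) \<le> r ^ (j + 1)" if j: "j \<in> {2..<m}" for j
  proof -
    have "measure M (Up j) \<le> (1 / (2 * A / real j)) ^ (j + 1) / fact (j + 1)"
      unfolding Up_def cnt_def using j Apos by (intro ppp_ge[OF ppp]) auto
    also have "\<dots> = (real j / (2 * A)) ^ (j + 1) / fact (j + 1)" by simp
    also have "\<dots> \<le> r ^ (j + 1)" unfolding r_def by (rule up_numeric[OF Apos])
    finally show ?thesis .
  qed
  have PLo: "measure M (Lo j) \<le> (1 / 2) ^ j" if j: "j \<in> {J0..<J}" for j
  proof -
    have "measure M (Lo j) \<le> (real j + 1) * ((1 / (1 / (8 * real j))) ^ j / fact j) * exp (- (1 / (1 / (8 * real j))))"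
      unfolding Lo_def cnt_def using j J by (intro ppp_le[OF ppp]) auto
    also have "\<dots> = (real j + 1) * ((8 * real j) ^ j / fact j) * exp (- (8 * real j))" by simp
    also have "\<dots> \<le> (1 / 2) ^ j" by (rule lo_numeric)
    finally show ?thesis .
  qed
  have PLay: "measure M (Lay k) \<le> exp (- (2 * real k)) / 2" for k
  proof -
    have "measure M (Lay k) \<le> (1 / exp (real k)) ^ 2 / fact 2"
      unfolding Lay_def cnt_def by (intro ppp_ge[OF ppp]) auto
    also have "\<dots> = exp (- (2 * real k)) / 2"
    proof -
      have "1 / exp (real k) = exp (- real k)" by (simp add: exp_minus inverse_eq_divide)
      then have "(1 / exp (real k)) ^ 2 = exp (- real k) * exp (- real k)" by (simp add: power2_eq_square)
      also have "\<dots> = exp (- (2 * real k))" by (simp add: exp_add[symmetric])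
      finally show ?thesis by simp
    qed
    finally show ?thesis .
  qed
  have PBad: "measure M Bad \<le> exp (- (8 * real m)) + 1 / B + 2 * r ^ 3 + 2 * (1 / 2) ^ J0"
  proof -
    have U1: "measure M (\<Union>j\<in>{2..<m}. Up j) \<le> (\<Sum>j\<in>{2..<m}. measure M (Up j))"
      using Ups by (intro P.finite_measure_subadditive_finite) auto
    have U2: "(\<Sum>j\<in>{2..<m}. measure M (Up j)) \<le> (\<Sum>j\<in>{2..<m}. r * r ^ j)"
      using PUp by (intro sum_mono) auto
    have U3: "(\<Sum>j\<in>{2..<m}. r * r ^ j) \<le> 2 * r ^ 3"
    proof -
      have "(\<Sum>j\<in>{2..<m}. r * r ^ j) = r * (\<Sum>j\<in>{2..<m}. r ^ j)" by (simp add: sum_distrib_left)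
      also have "(\<Sum>j\<in>{2..<m}. r ^ j) \<le> r ^ 2 / (1 - r)" using r0 by (intro geom_tail) auto
      also have "r ^ 2 / (1 - r) \<le> 2 * r ^ 2"
      proof -
        have "r ^ 2 \<le> 2 * r ^ 2 * (1 - r)"
        proof -
          have "r * r ^ 2 \<le> (1/2) * r ^ 2" using r0 by (intro mult_right_mono) auto
          then show ?thesis by (simp add: algebra_simps)
        qed
        then show ?thesis using r0 by (simp add: pos_divide_le_eq)
      qed
      finally show ?thesis using r0 by (simp add: mult_left_mono power3_eq_cube power2_eq_square mult.assoc)
    qed
    have L1: "measure M (\<Union>j\<in>{J0..<J}. Lo j) \<le> (\<Sum>j\<in>{J0..<J}. measure M (Lo j))"
      using Los by (intro P.finite_measure_subadditive_finite) auto
    have L2: "(\<Sum>j\<in>{J0..<J}. measure M (Lo j)) \<le> (\<Sum>j\<in>{J0..<J}. (1 / 2) ^ j)"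
      using PLo by (intro sum_mono) auto
    have L3: "(\<Sum>j\<in>{J0..<J}. (1 / 2::real) ^ j) \<le> 2 * (1 / 2) ^ J0"
      using geom_tail[of "1/2::real" J0 J] by simp
    have UZ: "measure M (Z \<union> E0) \<le> measure M Z + measure M E0" using Zs E0s by (rule measure_Un_le)
    have UU: "measure M (Z \<union> E0 \<union> (\<Union>j\<in>{2..<m}. Up j)) \<le> measure M (Z \<union> E0) + measure M (\<Union>j\<in>{2..<m}. Up j)"
      using Zs E0s Ups by (intro measure_Un_le) auto
    have UL: "measure M Bad \<le> measure M (Z \<union> E0 \<union> (\<Union>j\<in>{2..<m}. Up j)) + measure M (\<Union>j\<in>{J0..<J}. Lo j)"
      unfolding Bad_def using Zs E0s Ups Los by (intro measure_Un_le) auto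
    show ?thesis using UZ UU UL U1 U2 U3 L1 L2 L3 PZ PE0 by linarith
  qed
  have PLsum: "(\<Sum>k<K0. exp (2 * real k + 2) / s\<^sup>2 * measure M (Lay k)) \<le> real K0 * exp 2 / (2 * s\<^sup>2)"
  proof -
    have "(\<Sum>k<K0. exp (2 * real k + 2) / s\<^sup>2 * measure M (Lay k))
        \<le> (\<Sum>k<K0. exp (2 * real k + 2) / s\<^sup>2 * (exp (- (2 * real k)) / 2))"
      using PLay by (intro sum_mono mult_left_mono) auto
    also have "\<dots> = (\<Sum>k<K0. exp 2 / (2 * s\<^sup>2))"
    proof (rule sum.cong[OF refl])
      fix k
      have "exp (2 * real k + 2) * exp (- (2 * real k)) = exp 2" by (simp add: exp_add[symmetric])
      then show "exp (2 * real k + 2) / s\<^sup>2 * (exp (- (2 * real k)) / 2) = exp 2 / (2 * s\<^sup>2)"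
        by (simp add: field_simps)
    qed
    also have "\<dots> = real K0 * exp 2 / (2 * s\<^sup>2)" by simp
    finally show ?thesis .
  qed
  show ?thesis
    using int_le int_h_eq PBad PLsum PLay[of K0] unfolding Kc_def r_def by linarith
qed

definition sp :: "real \<Rightarrow> real \<Rightarrow> real" where
  "sp \<epsilon> x = (1/8) * (ln (x powr \<epsilon> - 1) - ln (x powr (\<epsilon>/2)))"

definition gfun :: "real \<Rightarrow> real \<Rightarrow> real \<Rightarrow> real \<Rightarrow> real \<Rightarrow> real \<Rightarrow> real \<Rightarrow> real" where
  "gfun \<epsilon> \<beta> \<kappa> u c d x =
     exp (- (8 * x)) + 1 / ln x powr 2 + 2 * (exp 1 / (2 * (exp 1 * ln x powr (2/5)))) ^ 3
     + 2 * (1/2) powr (x powr (\<epsilon>/2) - 1)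
     + x powr \<epsilon> * exp (- (c * (x powr \<kappa> * x powr u)
          / (2 * ln x powr (2 * \<beta>) + d * ln x powr (2 / 5 * \<beta>) * x powr u)))
     + (4 * (exp 1 * ln x powr (2/5))\<^sup>2 / (sp \<epsilon> x)\<^sup>2 + 1 / (sp \<epsilon> x)\<^sup>2)
     + (ln (ln x) + 1) * exp 2 / (2 * (sp \<epsilon> x)\<^sup>2)
     + exp (- (2 * ln (ln x))) / 2"

lemma per_N_bound:
  fixes M :: "'a measure" and w :: "'a \<Rightarrow> nat \<Rightarrow> real" and \<gamma> \<beta> b \<epsilon> :: real and N :: nat
  assumes ppp: "is_ppp_atoms M w" and b: "b \<ge> 2" and beta: "0 < \<beta>" "\<beta> < 1" and g: "\<gamma> \<ge> 1"
    and eps: "0 < \<epsilon>" "\<epsilon> \<le> 1"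
    and L1: "1 \<le> ln (real N)" and Jc: "real N powr (\<epsilon>/2) < real N powr \<epsilon> - 1"
  shows "(\<integral>\<omega>. cond_exp_eta \<gamma> \<beta> b (w \<omega>) N \<partial>M)
     \<le> gfun \<epsilon> \<beta> (1 - \<epsilon> * \<beta> - \<gamma> * (1 - \<beta>)) (\<gamma> * (1 - \<beta>)) ((1/8) powr \<beta>)
          ((2 * exp 1) powr \<beta> * 2 powr (1 - \<beta>) / (1 - \<beta>)) (real N)"
proof -
  define x where "x = real N"
  define L where "L = ln x"
  define u where "u = \<gamma> * (1 - \<beta>)"
  define \<kappa> where "\<kappa> = 1 - \<epsilon> * \<beta> - \<gamma> * (1 - \<beta>)"
  define c where "c = (1/8::real) powr \<beta>"
  define d where "d = (2 * exp 1) powr \<beta> * 2 powr (1 - \<beta>) / (1 - \<beta>)"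
  have L1': "1 \<le> L" using L1 unfolding L_def x_def .
  have N1: "N \<ge> 1"
  proof (rule ccontr)
    assume "\<not> N \<ge> 1" then have "N = 0" by simp
    then show False using L1 by simp
  qed
  have x1: "1 \<le> x" unfolding x_def using N1 by simp
  have xpos: "0 < x" using x1 by simp
  define m where "m = n_avail \<gamma> N"
  have m_eq: "m = nat \<lceil>x powr \<gamma>\<rceil>" unfolding m_def n_avail_def x_def ..
  have xg: "x \<le> x powr \<gamma>" using x1 g powr_mono[of 1 \<gamma> x] by simp
  have m_ge: "x \<le> real m" unfolding m_eq using xg by linarith
  have m_le: "real m \<le> 2 * x powr \<gamma>"
  proof -
    have "real m \<le> x powr \<gamma> + 1" unfolding m_eq using xg x1 by linarith
    moreover have "1 \<le> x powr \<gamma>" using x1 xg by linarith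
    ultimately show ?thesis by linarith
  qed
  have Nm: "N \<le> n_avail \<gamma> N" using m_ge unfolding m_def x_def by simp
  define J where "J = nat \<lfloor>x powr \<epsilon>\<rfloor>"
  define J0 where "J0 = nat \<lfloor>x powr (\<epsilon>/2)\<rfloor>"
  have xe1: "1 \<le> x powr (\<epsilon>/2)" using x1 eps by (intro ge_one_powr_ge_zero) auto
  have J0_le: "real J0 \<le> x powr (\<epsilon>/2)" unfolding J0_def using xe1 by linarith
  have J0_ge: "x powr (\<epsilon>/2) - 1 < real J0" unfolding J0_def using xe1 by linarith
  have J_le: "real J \<le> x powr \<epsilon>" unfolding J_def using xpos by (simp add: of_nat_floor)
  have J_ge: "x powr \<epsilon> - 1 < real J" unfolding J_def using xpos by linarith
  have J01: "1 \<le> J0" using J0_def xe1 by linarith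
  have J0J: "J0 < J" using J0_le J_ge Jc unfolding x_def by linarith
  have Jm: "J \<le> n_avail \<gamma> N"
  proof -
    have "x powr \<epsilon> \<le> x powr 1" using x1 eps by (intro powr_mono) auto
    then have "x powr \<epsilon> \<le> x" using xpos by simp
    then have "real J \<le> real m" using J_le m_ge by linarith
    then show ?thesis unfolding m_def by simp
  qed
  define A where "A = exp 1 * L powr (2/5)"
  define B where "B = L powr 2"
  have LA: "1 \<le> L powr (2/5)" using L1' by (intro ge_one_powr_ge_zero) auto
  have A: "exp 1 \<le> A" unfolding A_def using LA by simp
  have Apos: "0 < A" using A by (smt (verit) exp_gt_zero)
  have B: "1 \<le> B" unfolding B_def using L1' by (intro ge_one_powr_ge_zero) auto
  define K0 where "K0 = nat \<lceil>ln L\<rceil>"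
  have lnL: "0 \<le> ln L" using L1' by simp
  have K0_ge: "ln L \<le> real K0" unfolding K0_def by linarith
  have K0_le: "real K0 \<le> ln L + 1" unfolding K0_def using lnL by linarith
  define s where "s = (\<Sum>j\<in>{J0..<J}. 1 / (8 * real j))"
  define Dmax where "Dmax = 2 * B powr \<beta> + (2 * A) powr \<beta> * real (n_avail \<gamma> N) powr (1 - \<beta>) / (1 - \<beta>)"
  have EB: "(\<integral>\<omega>. cond_exp_eta \<gamma> \<beta> b (w \<omega>) N \<partial>M)
     \<le> exp (- (8 * real m)) + 1 / B + 2 * (exp 1 / (2 * A)) ^ 3 + 2 * (1 / 2) ^ J0
       + (real J * exp (- real N * ((1 / (8 * real J)) powr \<beta> / Dmax)) + 4 * A\<^sup>2 / s\<^sup>2 + 1 / s\<^sup>2)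
       + real K0 * exp 2 / (2 * s\<^sup>2) + exp (- (2 * real K0)) / 2"
    unfolding m_def s_def Dmax_def
    by (rule expectation_bound[OF ppp b beta Nm A B J01 J0J Jm])
  have T1: "exp (- (8 * real m)) \<le> exp (- (8 * x))" using m_ge by simp
  have T4: "(1 / 2::real) ^ J0 \<le> (1/2) powr (x powr (\<epsilon>/2) - 1)"
  proof -
    have "(1 / 2::real) ^ J0 = (1/2) powr (real J0)" by (simp add: powr_realpow)
    also have "\<dots> \<le> (1/2) powr (x powr (\<epsilon>/2) - 1)" using J0_ge by (intro powr_mono') auto
    finally show ?thesis .
  qed
  have sp_pos: "0 < sp \<epsilon> x"
  proof -
    have "x powr (\<epsilon>/2) < x powr \<epsilon> - 1" using Jc unfolding x_def .
    moreover have "0 < x powr (\<epsilon>/2)" using xpos by simp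
    ultimately have p1: "0 < x powr (\<epsilon>/2)" and p2: "0 < x powr \<epsilon> - 1" and p3: "x powr (\<epsilon>/2) < x powr \<epsilon> - 1"
      by linarith+
    have "ln (x powr (\<epsilon>/2)) < ln (x powr \<epsilon> - 1)" using ln_less_cancel_iff[OF p1 p2] p3 by simp
    then show ?thesis unfolding sp_def by simp
  qed
  have s_ge: "sp \<epsilon> x \<le> s"
  proof -
    have "ln (real J) - ln (real J0) \<le> (\<Sum>j\<in>{J0..<J}. 1 / real j)"
      using J01 J0J by (intro harmonic_lower) auto
    moreover have "ln (x powr \<epsilon> - 1) \<le> ln (real J)"
    proof -
      have "0 < x powr \<epsilon> - 1" using Jc xe1 unfolding x_def by linarith
      then show ?thesis using J_ge by (subst ln_le_cancel_iff) auto
    qed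
    moreover have "ln (real J0) \<le> ln (x powr (\<epsilon>/2))"
      using J0_le J01 by (subst ln_le_cancel_iff) auto
    moreover have "s = (1/8) * (\<Sum>j\<in>{J0..<J}. 1 / real j)"
      unfolding s_def by (simp add: sum_distrib_left)
    ultimately have "ln (x powr \<epsilon> - 1) - ln (x powr (\<epsilon>/2)) \<le> (\<Sum>j\<in>{J0..<J}. 1 / real j)"
      and se: "s = (1/8) * (\<Sum>j\<in>{J0..<J}. 1 / real j)" by linarith+
    then have "(1/8) * (ln (x powr \<epsilon> - 1) - ln (x powr (\<epsilon>/2))) \<le> (1/8) * (\<Sum>j\<in>{J0..<J}. 1 / real j)"
      by (intro mult_left_mono) auto
    then show ?thesis unfolding sp_def se .
  qed
  have inv_s: "1 / s\<^sup>2 \<le> 1 / (sp \<epsilon> x)\<^sup>2"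
    using s_ge sp_pos by (intro divide_left_mono power_mono) auto
  have T6: "4 * A\<^sup>2 / s\<^sup>2 + 1 / s\<^sup>2 \<le> 4 * (exp 1 * ln x powr (2/5))\<^sup>2 / (sp \<epsilon> x)\<^sup>2 + 1 / (sp \<epsilon> x)\<^sup>2"
  proof -
    have "4 * A\<^sup>2 / s\<^sup>2 = 4 * A\<^sup>2 * (1 / s\<^sup>2)" by simp
    also have "\<dots> \<le> 4 * A\<^sup>2 * (1 / (sp \<epsilon> x)\<^sup>2)" using inv_s by (intro mult_left_mono) auto
    also have "\<dots> = 4 * (exp 1 * ln x powr (2/5))\<^sup>2 / (sp \<epsilon> x)\<^sup>2" unfolding A_def L_def by simp
    finally show ?thesis using inv_s by linarith
  qed
  have T7: "real K0 * exp 2 / (2 * s\<^sup>2) \<le> (ln (ln x) + 1) * exp 2 / (2 * (sp \<epsilon> x)\<^sup>2)"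
  proof -
    have "real K0 * exp 2 / (2 * s\<^sup>2) = real K0 * exp 2 / 2 * (1 / s\<^sup>2)" by simp
    also have "\<dots> \<le> (ln (ln x) + 1) * exp 2 / 2 * (1 / (sp \<epsilon> x)\<^sup>2)"
      using inv_s K0_le unfolding L_def by (intro mult_mono divide_right_mono mult_right_mono) auto
    also have "\<dots> = (ln (ln x) + 1) * exp 2 / (2 * (sp \<epsilon> x)\<^sup>2)" by simp
    finally show ?thesis .
  qed
  have T8: "exp (- (2 * real K0)) / 2 \<le> exp (- (2 * ln (ln x))) / 2"
    using K0_ge unfolding L_def by simp
  have T5: "real J * exp (- real N * ((1 / (8 * real J)) powr \<beta> / Dmax))
      \<le> x powr \<epsilon> * exp (- (c * (x powr \<kappa> * x powr u)
          / (2 * ln x powr (2 * \<beta>) + d * ln x powr (2 / 5 * \<beta>) * x powr u)))"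
  proof -
    define D' where "D' = 2 * ln x powr (2 * \<beta>) + d * ln x powr (2 / 5 * \<beta>) * x powr u"
    have Bp: "B powr \<beta> = ln x powr (2 * \<beta>)" unfolding B_def L_def by (rule powr_powr)
    have Ap: "(2 * A) powr \<beta> = (2 * exp 1) powr \<beta> * ln x powr (2 / 5 * \<beta>)"
      unfolding A_def L_def using L1' by (simp add: powr_mult powr_powr L_def mult.assoc)
    have mp: "real m powr (1 - \<beta>) \<le> 2 powr (1 - \<beta>) * x powr u"
    proof -
      have "real m powr (1 - \<beta>) \<le> (2 * x powr \<gamma>) powr (1 - \<beta>)"
        using m_le beta by (intro powr_mono2) auto
      also have "\<dots> = 2 powr (1 - \<beta>) * x powr u"
        unfolding u_def using xpos by (simp add: powr_mult powr_powr)
      finally show ?thesis .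
    qed
    have dpos: "0 < d" unfolding d_def using beta by simp
    have Dle: "Dmax \<le> D'"
    proof -
      have "(2 * A) powr \<beta> * real m powr (1 - \<beta>) / (1 - \<beta>)
          \<le> (2 * A) powr \<beta> * (2 powr (1 - \<beta>) * x powr u) / (1 - \<beta>)"
        using mp beta by (intro divide_right_mono mult_left_mono) auto
      also have "\<dots> = d * ln x powr (2 / 5 * \<beta>) * x powr u"
        unfolding Ap d_def by (simp add: field_simps)
      finally show ?thesis unfolding Dmax_def D'_def Bp m_def by simp
    qed
    have Dpos: "0 < Dmax" unfolding Dmax_def using Apos B beta by (intro add_pos_nonneg) auto
    have Jpos: "0 < real J" using J01 J0J by simp
    have q1: "c * x powr (- (\<epsilon> * \<beta>)) \<le> (1 / (8 * real J)) powr \<beta>"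
    proof -
      have "(1 / (8 * x powr \<epsilon>)) powr \<beta> \<le> (1 / (8 * real J)) powr \<beta>"
      proof -
        have "0 < x powr \<epsilon>" using xpos by simp
        then show ?thesis using J_le Jpos beta by (intro powr_mono2 divide_left_mono) auto
      qed
      moreover have "(1 / (8 * x powr \<epsilon>)) powr \<beta> = c * x powr (- (\<epsilon> * \<beta>))"
        unfolding c_def using xpos
        by (simp add: powr_divide powr_mult powr_powr powr_minus_divide)
      ultimately show ?thesis by simp
    qed
    have xk: "x * x powr (- (\<epsilon> * \<beta>)) = x powr \<kappa> * x powr u"
      unfolding \<kappa>_def u_def using xpos by (simp add: powr_add[symmetric] powr_mult_base)
    have "c * (x powr \<kappa> * x powr u) / D' \<le> c * (x powr \<kappa> * x powr u) / Dmax"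
      using Dle Dpos unfolding c_def by (intro divide_left_mono) auto
    also have "\<dots> = x * (c * x powr (- (\<epsilon> * \<beta>))) / Dmax" using xk by (simp add: algebra_simps)
    also have "\<dots> \<le> x * (1 / (8 * real J)) powr \<beta> / Dmax"
      using q1 xpos Dpos by (intro divide_right_mono mult_left_mono) auto
    also have "\<dots> = real N * ((1 / (8 * real J)) powr \<beta> / Dmax)" unfolding x_def by simp
    finally have ex: "exp (- real N * ((1 / (8 * real J)) powr \<beta> / Dmax)) \<le> exp (- (c * (x powr \<kappa> * x powr u) / D'))"
      by simp
    have "real J * exp (- real N * ((1 / (8 * real J)) powr \<beta> / Dmax)) \<le> x powr \<epsilon> * exp (- (c * (x powr \<kappa> * x powr u) / D'))"
      using J_le ex by (intro mult_mono) auto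
    then show ?thesis unfolding D'_def .
  qed
  have T2: "1 / B = 1 / ln x powr 2" unfolding B_def L_def ..
  have T3: "2 * (exp 1 / (2 * A)) ^ 3 = 2 * (exp 1 / (2 * (exp 1 * ln x powr (2/5)))) ^ 3" unfolding A_def L_def ..
  show ?thesis
    using EB T1 T2 T3 T4 T5 T6 T7 T8
    unfolding gfun_def x_def[symmetric] \<kappa>_def u_def c_def d_def
    by linarith
qed

lemma asym_gfun:
  fixes \<epsilon> \<beta> \<kappa> u c d :: real
  assumes "\<epsilon> > 0" "\<beta> > 0" "\<kappa> > 0" "u > 0" "c > 0" "d > 0"
  shows "((\<lambda>x. ln x * gfun \<epsilon> \<beta> \<kappa> u c d x) \<longlongrightarrow> 0) at_top"
proof -
  have l1: "((\<lambda>x::real. ln x * exp (- (8 * x))) \<longlongrightarrow> 0) at_top"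
    using assms unfolding sp_def by real_asymp
  have l2: "((\<lambda>x::real. ln x * (1 / ln x powr 2)) \<longlongrightarrow> 0) at_top"
    using assms unfolding sp_def by real_asymp
  have l3: "((\<lambda>x::real. ln x * (2 * (exp 1 / (2 * (exp 1 * ln x powr (2/5)))) ^ 3)) \<longlongrightarrow> 0) at_top"
    using assms unfolding sp_def by real_asymp
  have l4: "((\<lambda>x::real. ln x * (2 * (1/2) powr (x powr (\<epsilon>/2) - 1))) \<longlongrightarrow> 0) at_top"
    using assms unfolding sp_def by real_asymp
  have l5: "((\<lambda>x::real. ln x * (x powr \<epsilon> * exp (- (c * (x powr \<kappa> * x powr u)
          / (2 * ln x powr (2 * \<beta>) + d * ln x powr (2 / 5 * \<beta>) * x powr u))))) \<longlongrightarrow> 0) at_top"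
    using assms unfolding sp_def by real_asymp
  have l6: "((\<lambda>x::real. ln x * (4 * (exp 1 * ln x powr (2/5))\<^sup>2 / (sp \<epsilon> x)\<^sup>2 + 1 / (sp \<epsilon> x)\<^sup>2)) \<longlongrightarrow> 0) at_top"
    using assms unfolding sp_def by real_asymp
  have l7: "((\<lambda>x::real. ln x * ((ln (ln x) + 1) * exp 2 / (2 * (sp \<epsilon> x)\<^sup>2))) \<longlongrightarrow> 0) at_top"
    using assms unfolding sp_def by real_asymp
  have l8: "((\<lambda>x::real. ln x * (exp (- (2 * ln (ln x))) / 2)) \<longlongrightarrow> 0) at_top"
    using assms unfolding sp_def by real_asymp
  have "((\<lambda>x::real. ln x * exp (- (8 * x)) + ln x * (1 / ln x powr 2)
      + ln x * (2 * (exp 1 / (2 * (exp 1 * ln x powr (2/5)))) ^ 3)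
      + ln x * (2 * (1/2) powr (x powr (\<epsilon>/2) - 1))
      + ln x * (x powr \<epsilon> * exp (- (c * (x powr \<kappa> * x powr u)
          / (2 * ln x powr (2 * \<beta>) + d * ln x powr (2 / 5 * \<beta>) * x powr u))))
      + ln x * (4 * (exp 1 * ln x powr (2/5))\<^sup>2 / (sp \<epsilon> x)\<^sup>2 + 1 / (sp \<epsilon> x)\<^sup>2)
      + ln x * ((ln (ln x) + 1) * exp 2 / (2 * (sp \<epsilon> x)\<^sup>2))
      + ln x * (exp (- (2 * ln (ln x))) / 2)) \<longlongrightarrow> 0 + 0 + 0 + 0 + 0 + 0 + 0 + 0) at_top"
    by (intro tendsto_add l1 l2 l3 l4 l5 l6 l7 l8)
  then show ?thesis unfolding gfun_def by (simp add: distrib_left)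
qed

theorem lemma6p6:
  fixes M :: "'a measure" and w :: "'a \<Rightarrow> nat \<Rightarrow> real"
    and \<gamma> \<beta> b :: real
  assumes "\<gamma> > 1" and "0 < \<beta>" and "\<beta> < 1"
    and "1 - 1 / \<gamma> < \<beta>"
    and "is_ppp_atoms M w"
    and "b \<ge> 2"
  shows "(\<lambda>N. ln (real N) * (\<integral>\<omega>. cond_exp_eta \<gamma> \<beta> b (w \<omega>) N \<partial>M))
           \<longlonglongrightarrow> 0"
proof -
  note g = assms(1) and beta = assms(2,3) and ppp = assms(5) and b = assms(6)
  define u where "u = \<gamma> * (1 - \<beta>)"
  have u_pos: "0 < u" unfolding u_def using g beta by simp
  have u_lt: "u < 1"
  proof -
    have "1 - \<beta> < 1 / \<gamma>" using assms(4) by simp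
    then have "\<gamma> * (1 - \<beta>) < \<gamma> * (1 / \<gamma>)" using g by (intro mult_strict_left_mono) auto
    then show ?thesis unfolding u_def using g by simp
  qed
  define \<epsilon> where "\<epsilon> = (1 - u) / 2"
  have eps: "0 < \<epsilon>" "\<epsilon> \<le> 1" unfolding \<epsilon>_def using u_lt u_pos by auto
  define \<kappa> where "\<kappa> = 1 - \<epsilon> * \<beta> - \<gamma> * (1 - \<beta>)"
  have kap: "0 < \<kappa>"
  proof -
    have "\<kappa> = \<epsilon> * (2 - \<beta>)" unfolding \<kappa>_def \<epsilon>_def u_def[symmetric] by (simp add: field_simps)
    then show ?thesis using eps beta by simp
  qed
  define c where "c = (1/8::real) powr \<beta>"
  define d where "d = (2 * exp 1) powr \<beta> * 2 powr (1 - \<beta>) / (1 - \<beta>)"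
  have cpos: "0 < c" unfolding c_def by simp
  have dpos: "0 < d" unfolding d_def using beta by simp
  define E where "E = (\<lambda>N. (\<integral>\<omega>. cond_exp_eta \<gamma> \<beta> b (w \<omega>) N \<partial>M))"
  define G where "G = (\<lambda>x. ln x * gfun \<epsilon> \<beta> \<kappa> u c d x)"
  have limG: "(G \<longlongrightarrow> 0) at_top" unfolding G_def
    by (rule asym_gfun[OF eps(1) beta(1) kap u_pos cpos dpos])
  have limGs: "(\<lambda>N. G (real N)) \<longlonglongrightarrow> 0"
    by (rule filterlim_compose[OF limG filterlim_real_sequentially])
  have ev1: "eventually (\<lambda>x::real. 1 \<le> ln x) at_top" by real_asymp
  have ev2: "eventually (\<lambda>x::real. x powr (\<epsilon>/2) < x powr \<epsilon> - 1) at_top" using eps by real_asymp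
  have ev: "eventually (\<lambda>N. 1 \<le> ln (real N) \<and> real N powr (\<epsilon>/2) < real N powr \<epsilon> - 1) sequentially"
    by (rule eventually_compose_filterlim[OF eventually_conj[OF ev1 ev2] filterlim_real_sequentially])
  have E_nn: "0 \<le> E N" for N
  proof -
    interpret P: prob_space M using ppp by (simp add: is_ppp_atoms_def)
    have Wp: "\<forall>\<omega>\<in>space M. (\<forall>i j. i < j \<longrightarrow> w \<omega> j < w \<omega> i) \<and> (\<forall>i. 0 < w \<omega> i)"
      using ppp unfolding is_ppp_atoms_def by (elim conjE)
    show ?thesis unfolding E_def
    proof (rule Bochner_Integration.integral_nonneg)
      fix \<omega> assume "\<omega> \<in> space M"
      then have dec: "\<And>i j. i < j \<Longrightarrow> w \<omega> j < w \<omega> i" and pos: "\<And>i. 0 < w \<omega> i" using Wp by auto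
      show "0 \<le> cond_exp_eta \<gamma> \<beta> b (w \<omega>) N"
        unfolding cond_exp_eta_def using eta_sum_bound(1)[OF dec pos _ b]
        by (intro sum_nonneg mult_nonneg_nonneg draw_prob_nonneg) (auto intro: sum_nonneg)
    qed
  qed
  have lower: "eventually (\<lambda>N. 0 \<le> ln (real N) * E N) sequentially"
    using ev by eventually_elim (use E_nn in auto)
  have upper: "eventually (\<lambda>N. ln (real N) * E N \<le> G (real N)) sequentially"
    using ev
  proof eventually_elim
    case (elim N)
    have "E N \<le> gfun \<epsilon> \<beta> \<kappa> u c d (real N)"
      unfolding E_def \<kappa>_def u_def c_def d_def
      by (rule per_N_bound[OF ppp b beta _ eps]) (use g elim in auto)
    then show ?case unfolding G_def using elim by (intro mult_left_mono) auto
  qed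
  have "(\<lambda>N. ln (real N) * E N) \<longlonglongrightarrow> 0"
    by (rule tendsto_sandwich[OF lower upper tendsto_const limGs])
  then show ?thesis unfolding E_def .
qed

end
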